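(* Let $L$ be a number field, $\Gamma$ an order of $L$, $K\subseteq L$ a subfield with ring of integers $\mathcal O_K$ and $n=[L:K]$, $R=\mathrm M_n(\mathcal O_K)$, and $\varphi:K\to L$ a ring morphism. Then there is a bijection $\operatorname{Hom}_\varphi(\Gamma,R)/R^\times\cong J_\varphi$.
   Context: $L$ is a $K$-algebra via $\varphi$; a ring morphism $\rho:\Gamma\to R$ is $\varphi$-compatible if $\rho\otimes\mathbb Q:L\to\mathrm M_n(K)$ is a morphism of $K$-algebras; $\operatorname{Hom}_\varphi(\Gamma,R)$ is the set of such $\rho$, on which $R^\times$ acts by conjugation. Fix a positive integer $z$ with $\varphi(z\mathcal O_K)\subseteq\Gamma$ and let $\mathcal O'=\mathbb Z[z\mathcal O_K]\subseteq\mathcal O_K$; then $\varphi$ restricts to a ring morphism $\mathcal O'\to\Gamma$, giving each $\Gamma$-module $X$ an $\mathcal O'$-module structure $X|_{\mathcal O'}$. Let $\mathcal O_K^n|_{\mathcal O'}$ be $\mathcal O_K^n$ with the $\mathcal O'$-action by (diagonal) multiplication through $\mathcal O'\subseteq\mathcal O_K$. $J_\varphi$ is the set of isomorphism classes of $\Gamma$-modules $X$ with $X|_{\mathcal O'}\cong\mathcal O_K^n|_{\mathcal O'}$ as $\mathcal O'$-modules (this set does not depend on the choice of $z$). *)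

theory Defs
  imports "Jordan_Normal_Form.Matrix" "HOL-Algebra.Module" "HOL-Computational_Algebra.Polynomial"
    "HOL-Library.FuncSet"
begin

text \<open>The number field L is modelled as the whole of a type 'a of characteristic 0
  which is finite-dimensional over the rationals.\<close>

definition number_field_type :: "'a::field_char_0 itself \<Rightarrow> bool" where
  "number_field_type _ \<longleftrightarrow>
     (\<exists>B::'a set. finite B \<and> (\<forall>x::'a. \<exists>c. x = (\<Sum>b\<in>B. of_rat (c b) * b)))"

definition is_subfield :: "'a::field set \<Rightarrow> bool" where
  "is_subfield K \<longleftrightarrow> 0 \<in> K \<and> 1 \<in> K \<and> (\<forall>a\<in>K. \<forall>b\<in>K. a + b \<in> K \<and> a - b \<in> K \<and> a * b \<in> K)
     \<and> (\<forall>a\<in>K. a \<noteq> 0 \<longrightarrow> inverse a \<in> K)"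

definition is_subring :: "'a::comm_ring_1 set \<Rightarrow> bool" where
  "is_subring S \<longleftrightarrow> 1 \<in> S \<and> (\<forall>a\<in>S. \<forall>b\<in>S. a + b \<in> S \<and> a - b \<in> S \<and> a * b \<in> S)"

definition is_order :: "'a::field_char_0 set \<Rightarrow> bool" where
  "is_order G \<longleftrightarrow> is_subring G
     \<and> (\<exists>B. finite B \<and> B \<subseteq> G \<and> G = {(\<Sum>b\<in>B. of_int (c b) * b) | c. True})
     \<and> (\<forall>x::'a. \<exists>m::int. m \<noteq> 0 \<and> of_int m * x \<in> G)"

definition algebraic_integer :: "'a::field_char_0 \<Rightarrow> bool" where
  "algebraic_integer x \<longleftrightarrow> (\<exists>p::int poly. lead_coeff p = 1 \<and> poly (map_poly of_int p) x = 0)"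

definition ring_of_integers :: "'a::field_char_0 set \<Rightarrow> 'a set" where
  "ring_of_integers K = {x \<in> K. algebraic_integer x}"

definition is_K_basis :: "'a::field set \<Rightarrow> 'a set \<Rightarrow> bool" where
  "is_K_basis K B \<longleftrightarrow> finite B
     \<and> (\<forall>x::'a. \<exists>c. (\<forall>b\<in>B. c b \<in> K) \<and> x = (\<Sum>b\<in>B. c b * b))
     \<and> (\<forall>c. (\<forall>b\<in>B. c b \<in> K) \<and> (\<Sum>b\<in>B. c b * b) = 0 \<longrightarrow> (\<forall>b\<in>B. c b = 0))"

definition field_degree :: "'a::field set \<Rightarrow> nat" where
  "field_degree K = (THE n. \<exists>B. is_K_basis K B \<and> card B = n)"

definition ring_morphism_on :: "'a::field set \<Rightarrow> ('a \<Rightarrow> 'a) \<Rightarrow> bool" where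
  "ring_morphism_on K f \<longleftrightarrow> f 1 = 1 \<and> (\<forall>a\<in>K. \<forall>b\<in>K. f (a + b) = f a + f b \<and> f (a * b) = f a * f b)"

definition matR :: "'a::field_char_0 set \<Rightarrow> nat \<Rightarrow> 'a mat set" where
  "matR K n = {A \<in> carrier_mat n n. \<forall>i<n. \<forall>j<n. A $$ (i, j) \<in> ring_of_integers K}"

definition matK :: "'a::field set \<Rightarrow> nat \<Rightarrow> 'a mat set" where
  "matK K n = {A \<in> carrier_mat n n. \<forall>i<n. \<forall>j<n. A $$ (i, j) \<in> K}"

definition unitsR :: "'a::field_char_0 set \<Rightarrow> nat \<Rightarrow> 'a mat set" where
  "unitsR K n = {u \<in> matR K n. \<exists>v\<in>matR K n. u * v = 1\<^sub>m n \<and> v * u = 1\<^sub>m n}"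

definition ring_hom_GR :: "'a::field_char_0 set \<Rightarrow> 'a set \<Rightarrow> nat \<Rightarrow> ('a \<Rightarrow> 'a mat) \<Rightarrow> bool" where
  "ring_hom_GR G K n \<rho> \<longleftrightarrow> \<rho> \<in> extensional G \<and> (\<forall>x\<in>G. \<rho> x \<in> matR K n)
     \<and> \<rho> 1 = 1\<^sub>m n \<and> (\<forall>x\<in>G. \<forall>y\<in>G. \<rho> (x + y) = \<rho> x + \<rho> y \<and> \<rho> (x * y) = \<rho> x * \<rho> y)"

definition rho_Q :: "'a::field_char_0 set \<Rightarrow> ('a \<Rightarrow> 'a mat) \<Rightarrow> 'a \<Rightarrow> 'a mat" where
  "rho_Q G \<rho> x = (let m = (SOME m::int. m \<noteq> 0 \<and> of_int m * x \<in> G)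
                     in (1 / of_int m) \<cdot>\<^sub>m \<rho> (of_int m * x))"

definition phi_compatible :: "'a::field_char_0 set \<Rightarrow> 'a set \<Rightarrow> nat \<Rightarrow> ('a \<Rightarrow> 'a) \<Rightarrow> ('a \<Rightarrow> 'a mat) \<Rightarrow> bool" where
  "phi_compatible G K n \<phi> \<rho> \<longleftrightarrow>
     (\<forall>x. rho_Q G \<rho> x \<in> matK K n)
     \<and> rho_Q G \<rho> 1 = 1\<^sub>m n
     \<and> (\<forall>x y. rho_Q G \<rho> (x + y) = rho_Q G \<rho> x + rho_Q G \<rho> y)
     \<and> (\<forall>x y. rho_Q G \<rho> (x * y) = rho_Q G \<rho> x * rho_Q G \<rho> y)
     \<and> (\<forall>k\<in>K. \<forall>x. rho_Q G \<rho> (\<phi> k * x) = k \<cdot>\<^sub>m rho_Q G \<rho> x)"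

definition Hom_phi :: "'a::field_char_0 set \<Rightarrow> 'a set \<Rightarrow> nat \<Rightarrow> ('a \<Rightarrow> 'a) \<Rightarrow> ('a \<Rightarrow> 'a mat) set" where
  "Hom_phi G K n \<phi> = {\<rho>. ring_hom_GR G K n \<rho> \<and> phi_compatible G K n \<phi> \<rho>}"

definition conj_rel :: "'a::field_char_0 set \<Rightarrow> 'a set \<Rightarrow> nat \<Rightarrow> ('a \<Rightarrow> 'a) \<Rightarrow> (('a \<Rightarrow> 'a mat) \<times> ('a \<Rightarrow> 'a mat)) set" where
  "conj_rel G K n \<phi> = {(\<rho>, \<sigma>). \<rho> \<in> Hom_phi G K n \<phi> \<and> \<sigma> \<in> Hom_phi G K n \<phi> \<and>
     (\<exists>u\<in>unitsR K n. \<exists>v\<in>matR K n. u * v = 1\<^sub>m n \<and> v * u = 1\<^sub>m n \<and> \<sigma> = (\<lambda>x\<in>G. u * \<rho> x * v))}"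

definition subring_ring :: "'a::comm_ring_1 set \<Rightarrow> 'a ring" where
  "subring_ring S = \<lparr>carrier = S, monoid.mult = (*), one = 1, zero = 0, add = (+)\<rparr>"

definition O_prime :: "'a::field_char_0 set \<Rightarrow> int \<Rightarrow> 'a set" where
  "O_prime K z = \<Inter>{S. is_subring S \<and> (\<lambda>a. of_int z * a) ` ring_of_integers K \<subseteq> S}"

definition module_iso :: "'r set \<Rightarrow> ('r, 'm) module \<Rightarrow> ('r, 'n) module \<Rightarrow> ('m \<Rightarrow> 'n) \<Rightarrow> bool" where
  "module_iso S M N f \<longleftrightarrow> bij_betw f (carrier M) (carrier N)
     \<and> (\<forall>x\<in>carrier M. \<forall>y\<in>carrier M. f (x \<oplus>\<^bsub>M\<^esub> y) = f x \<oplus>\<^bsub>N\<^esub> f y)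
     \<and> (\<forall>a\<in>S. \<forall>x\<in>carrier M. f (a \<odot>\<^bsub>M\<^esub> x) = a \<odot>\<^bsub>N\<^esub> f x)"

definition restrict_scalars :: "('a \<Rightarrow> 'a) \<Rightarrow> ('a, 'm) module \<Rightarrow> ('a, 'm) module" where
  "restrict_scalars \<phi> X = X\<lparr>module.smult := (\<lambda>a x. module.smult X (\<phi> a) x)\<rparr>"

definition OKn_module :: "'a::field_char_0 set \<Rightarrow> nat \<Rightarrow> ('a, 'a vec) module" where
  "OKn_module K n = \<lparr>carrier = {v \<in> carrier_vec n. \<forall>i<n. v $ i \<in> ring_of_integers K},
     monoid.mult = (\<lambda>_ _. 0\<^sub>v n), one = 0\<^sub>v n, zero = 0\<^sub>v n, add = (+), module.smult = (\<lambda>a v. a \<cdot>\<^sub>v v)\<rparr>"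

text \<open>Gamma-modules X (carrier inside a fixed countably infinite type, which suffices
  up to isomorphism since all such modules are countable) with X|O' = O_K^n|O'.\<close>
definition J_mods :: "'a::field_char_0 set \<Rightarrow> 'a set \<Rightarrow> nat \<Rightarrow> ('a \<Rightarrow> 'a) \<Rightarrow> int \<Rightarrow> ('a, nat) module set" where
  "J_mods G K n \<phi> z = {X. module (subring_ring G) X \<and>
      (\<exists>f. module_iso (O_prime K z) (restrict_scalars \<phi> X) (OKn_module K n) f)}"

definition Gamma_iso_rel :: "'a::field_char_0 set \<Rightarrow> ('a, nat) module set \<Rightarrow> (('a, nat) module \<times> ('a, nat) module) set" where
  "Gamma_iso_rel G S = {(X, Y). X \<in> S \<and> Y \<in> S \<and> (\<exists>f. module_iso G X Y f)}"

end

theory Submission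
  imports Defs "Jordan_Normal_Form.Char_Poly" "HOL-Library.Countable"
begin

definition zspan :: "'a::comm_ring_1 set \<Rightarrow> 'a set" where
  "zspan W = {\<Sum>w\<in>W. of_int (c w) * w | c. True}"

lemma zspanI: "x = (\<Sum>w\<in>W. of_int (c w) * w) \<Longrightarrow> x \<in> zspan W"
  unfolding zspan_def by blast

lemma zspan_add: assumes "x \<in> zspan W" "y \<in> zspan W" shows "x + y \<in> zspan W"
proof -
  obtain c d where "x = (\<Sum>w\<in>W. of_int (c w) * w)" "y = (\<Sum>w\<in>W. of_int (d w) * w)"
    using assms unfolding zspan_def by auto
  then have "x + y = (\<Sum>w\<in>W. of_int (c w + d w) * w)"
    by (simp add: sum.distrib distrib_right)
  then show ?thesis by (rule zspanI)
qed

lemma zspan_intmult: assumes "x \<in> zspan W" shows "of_int k * x \<in> zspan W"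
proof -
  obtain c where "x = (\<Sum>w\<in>W. of_int (c w) * w)"
    using assms unfolding zspan_def by auto
  then have "of_int k * x = (\<Sum>w\<in>W. of_int (k * c w) * w)"
    by (simp add: sum_distrib_left mult.assoc)
  then show ?thesis by (rule zspanI)
qed

lemma zspan_0: "0 \<in> zspan W"
  by (rule zspanI[where c="\<lambda>_. 0"]) simp

lemma zspan_elem: assumes "finite W" "u \<in> W" shows "u \<in> zspan W"
proof -
  have "(\<Sum>w\<in>W. of_int ((\<lambda>w. if w = u then 1 else 0) w) * w) = (\<Sum>w\<in>W. if w = u then w else 0)"
    by (rule sum.cong) auto
  also have "\<dots> = u" using assms by (simp add: sum.delta')
  finally show ?thesis by (rule zspanI[OF sym])
qed

lemma zspan_sum: assumes "finite I" "\<forall>i\<in>I. f i \<in> zspan W" shows "sum f I \<in> zspan W"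
  using assms by (induction I rule: finite_induct) (auto intro: zspan_add zspan_0)

lemma zspan_mult_closed: assumes "\<forall>w\<in>W. t * w \<in> zspan W" "x \<in> zspan W" "finite W"
  shows "t * x \<in> zspan W"
proof -
  obtain c where "x = (\<Sum>w\<in>W. of_int (c w) * w)"
    using assms unfolding zspan_def by auto
  then have "t * x = (\<Sum>w\<in>W. of_int (c w) * (t * w))"
    by (simp add: sum_distrib_left algebra_simps)
  also have "\<dots> \<in> zspan W" using assms(1) by (intro zspan_sum[OF assms(3)] ballI zspan_intmult) auto
  finally show ?thesis .
qed

lemma sum_distinct_list: "distinct xs \<Longrightarrow> sum f (set xs) = (\<Sum>l<length xs. f (xs ! l))"
proof -
  assume d: "distinct xs"
  have "inj_on (nth xs) {..<length xs}" using d by (simp add: inj_on_def nth_eq_iff_index_eq)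
  moreover have "nth xs ` {..<length xs} = set xs" by (auto simp: in_set_conv_nth)
  ultimately show ?thesis using sum.reindex[of "nth xs" "{..<length xs}" f] by simp
qed

lemma eigen_alg_int:
  fixes t :: "'a::field_char_0"
  assumes W: "finite W" and w0: "w0 \<in> W" "w0 \<noteq> 0" and cl: "\<forall>w\<in>W. t * w \<in> zspan W"
  shows "algebraic_integer t"
proof -
  obtain ws where ws: "set ws = W" "distinct ws" using finite_distinct_list[OF W] by blast
  define r where "r = length ws"
  have "\<exists>c. t * ws ! k = (\<Sum>w\<in>W. of_int (c w) * w)" if "k < r" for k
  proof -
    have "t * ws ! k \<in> zspan W" using cl ws that r_def nth_mem by blast
    then show ?thesis unfolding zspan_def by blast
  qed
  then have "\<forall>k. \<exists>c. k < r \<longrightarrow> t * ws ! k = (\<Sum>w\<in>W. of_int (c w) * w)" by blast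
  then obtain C where C: "\<And>k. k < r \<Longrightarrow> t * ws ! k = (\<Sum>w\<in>W. of_int (C k w) * w)"
    using choice[of "\<lambda>k c. k < r \<longrightarrow> t * ws ! k = (\<Sum>w\<in>W. of_int (c w) * w)"] by blast
  define A where "A = mat r r (\<lambda>(k,l). C k (ws ! l))"
  define v where "v = vec r (\<lambda>l. ws ! l)"
  have A: "A \<in> carrier_mat r r" unfolding A_def by simp
  have Av: "of_int_hom.mat_hom A *\<^sub>v v = t \<cdot>\<^sub>v v"
  proof (rule eq_vecI)
    fix k assume k: "k < dim_vec (t \<cdot>\<^sub>v v)"
    then have k: "k < r" unfolding v_def by simp
    have "(of_int_hom.mat_hom A *\<^sub>v v) $ k = (\<Sum>l<r. of_int (C k (ws ! l)) * ws ! l)"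
      using k unfolding A_def v_def
      by (simp add: scalar_prod_def atLeast0LessThan)
    also have "\<dots> = (\<Sum>w\<in>W. of_int (C k w) * w)"
      using sum_distinct_list[OF ws(2), of "\<lambda>w. of_int (C k w) * w"] ws r_def by simp
    also have "\<dots> = (t \<cdot>\<^sub>v v) $ k" using C[OF k] k unfolding v_def by simp
    finally show "(of_int_hom.mat_hom A *\<^sub>v v) $ k = (t \<cdot>\<^sub>v v) $ k" .
  qed (simp add: A_def v_def)
  have "v \<noteq> 0\<^sub>v r"
  proof
    assume "v = 0\<^sub>v r"
    obtain l where "l < r" "ws ! l = w0" using w0 ws unfolding r_def by (metis in_set_conv_nth)
    then have "v $ l = w0" unfolding v_def by simp
    with \<open>v = 0\<^sub>v r\<close> \<open>l < r\<close> w0 show False by simp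
  qed
  then have "eigenvector (of_int_hom.mat_hom A) v t"
    unfolding eigenvector_def using Av A by (simp add: v_def)
  then have "eigenvalue (of_int_hom.mat_hom A) t" unfolding eigenvalue_def by blast
  then have "poly (char_poly (of_int_hom.mat_hom A)) t = 0"
  proof -
    have "of_int_hom.mat_hom A \<in> carrier_mat r r" using A by simp
    from eigenvalue_root_char_poly[OF this] show ?thesis using \<open>eigenvalue (of_int_hom.mat_hom A) t\<close> by blast
  qed
  then have "poly (of_int_poly (char_poly A)) t = 0"
    using of_int_hom.char_poly_hom[OF A] by metis
  moreover have "lead_coeff (char_poly A) = 1" using degree_monic_char_poly[OF A] by simp
  ultimately show ?thesis unfolding algebraic_integer_def by blast
qed

lemma monic_pow:
  fixes x :: "'a::field_char_0"
  assumes "lead_coeff p = 1" "poly (of_int_poly p) x = 0"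
  shows "x ^ degree p = (\<Sum>l<degree p. of_int (- coeff p l) * x ^ l)"
proof -
  have "poly (of_int_poly p) x = (\<Sum>i\<le>degree p. of_int (coeff p i) * x ^ i)"
    by (simp add: poly_altdef)
  also have "\<dots> = (\<Sum>i<degree p. of_int (coeff p i) * x ^ i) + x ^ degree p"
  proof -
    have "{..degree p} = insert (degree p) {..<degree p}" by auto
    then show ?thesis using assms(1) by (simp add: add.commute)
  qed
  finally have "(\<Sum>i<degree p. of_int (coeff p i) * x ^ i) + x ^ degree p = 0"
    using assms(2) by simp
  then have "x ^ degree p = - (\<Sum>i<degree p. of_int (coeff p i) * x ^ i)"
    by (simp add: add_eq_0_iff)
  then show ?thesis by (simp add: sum_negf[symmetric])
qed

lemma monic_deg_pos:
  fixes x :: "'a::field_char_0"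
  assumes "lead_coeff p = 1" "poly (of_int_poly p) x = 0"
  shows "degree p > 0"
proof (rule ccontr)
  assume "\<not> degree p > 0"
  then have "degree p = 0" by simp
  then have "x ^ 0 = (\<Sum>l<0. of_int (- coeff p l) * x ^ l)" using monic_pow[OF assms] by simp
  then show False by simp
qed

lemma alg_int_W:
  fixes x y :: "'a::field_char_0"
  assumes "lead_coeff p = 1" "poly (of_int_poly p) x = 0"
    and W: "W = (\<lambda>(i,j). x^i * y^j) ` ({..<degree p} \<times> {..<e})"
  shows "\<forall>w\<in>W. x * w \<in> zspan W"
proof
  have fW: "finite W" using W by simp
  fix w assume "w \<in> W"
  then obtain i j where ij: "i < degree p" "j < e" "w = x^i * y^j" using W by auto
  show "x * w \<in> zspan W"
  proof (cases "Suc i < degree p")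
    case True
    then have "x * w \<in> W" using ij W by (auto intro!: image_eqI[of _ _ "(Suc i, j)"])
    then show ?thesis using fW zspan_elem by blast
  next
    case False
    then have "Suc i = degree p" using ij by simp
    have "x * w = x ^ Suc i * y ^ j" using ij(3) by (simp add: mult.assoc)
    also have "\<dots> = x ^ degree p * y ^ j" using \<open>Suc i = degree p\<close> by simp
    also have "\<dots> = (\<Sum>l<degree p. of_int (- coeff p l) * (x ^ l * y ^ j))"
      unfolding monic_pow[OF assms(1,2)] by (simp add: sum_distrib_right mult.assoc)
    also have "\<dots> \<in> zspan W"
    proof (rule zspan_sum)
      show "\<forall>l\<in>{..<degree p}. of_int (- coeff p l) * (x ^ l * y ^ j) \<in> zspan W"
      proof
        fix l assume "l \<in> {..<degree p}"
        then have "x ^ l * y ^ j \<in> W" using ij W by (auto intro!: image_eqI[of _ _ "(l, j)"])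
        then show "of_int (- coeff p l) * (x ^ l * y ^ j) \<in> zspan W"
          by (intro zspan_intmult zspan_elem[OF fW])
      qed
    qed (rule finite_lessThan)
    finally show ?thesis .
  qed
qed

lemma alg_int_add_mult:
  fixes x y :: "'a::field_char_0"
  assumes "algebraic_integer x" "algebraic_integer y"
  shows "algebraic_integer (x + y) \<and> algebraic_integer (x * y)"
proof -
  obtain p where p: "lead_coeff p = 1" "poly (of_int_poly p) x = 0"
    using assms(1) unfolding algebraic_integer_def by blast
  obtain q where q: "lead_coeff q = 1" "poly (of_int_poly q) y = 0"
    using assms(2) unfolding algebraic_integer_def by blast
  define W where "W = (\<lambda>(i,j). x^i * y^j) ` ({..<degree p} \<times> {..<degree q})"
  have W': "W = (\<lambda>(j,i). y^j * x^i) ` ({..<degree q} \<times> {..<degree p})"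
    unfolding W_def by (auto simp: mult.commute image_iff)
  have fW: "finite W" unfolding W_def by simp
  have 1: "1 \<in> W" unfolding W_def using monic_deg_pos[OF p] monic_deg_pos[OF q]
    by (auto intro!: image_eqI[of _ _ "(0, 0)"])
  have X: "\<forall>w\<in>W. x * w \<in> zspan W" by (rule alg_int_W[OF p W_def])
  have Y: "\<forall>w\<in>W. y * w \<in> zspan W" by (rule alg_int_W[OF q W'])
  have "\<forall>w\<in>W. (x + y) * w \<in> zspan W" using X Y by (simp add: distrib_right zspan_add)
  then have a: "algebraic_integer (x + y)" using eigen_alg_int[OF fW 1] by simp
  have "\<forall>w\<in>W. (x * y) * w \<in> zspan W"
    using X Y zspan_mult_closed[OF X _ fW] by (simp add: mult.assoc)
  then have m: "algebraic_integer (x * y)" using eigen_alg_int[OF fW 1] by simp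
  show ?thesis using a m by simp
qed

lemma alg_int_of_int: "algebraic_integer (of_int k :: 'a::field_char_0)"
proof -
  have "lead_coeff [:-k, 1:] = 1" by simp
  moreover have "poly (of_int_poly [:-k, 1:]) (of_int k :: 'a) = 0" by simp
  ultimately show ?thesis unfolding algebraic_integer_def by blast
qed

lemma alg_int_minus:
  fixes x y :: "'a::field_char_0"
  assumes "algebraic_integer x" "algebraic_integer y"
  shows "algebraic_integer (x - y)"
proof -
  have "algebraic_integer (of_int (-1) * y)" using alg_int_add_mult[OF alg_int_of_int assms(2)] by blast
  then have "algebraic_integer (x + of_int (-1) * y)" using alg_int_add_mult[OF assms(1)] by blast
  then show ?thesis by simp
qed

locale NF =
  fixes G K :: "'a::field_char_0 set" and \<phi> :: "'a \<Rightarrow> 'a" and z :: int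
  assumes order: "is_order G" and subf: "is_subfield K" and hom: "ring_morphism_on K \<phi>"
    and zpos: "z > 0" and zG: "(\<lambda>a. \<phi> (of_int z * a)) ` ring_of_integers K \<subseteq> G"
begin

abbreviation "OK \<equiv> ring_of_integers K"
abbreviation "Op \<equiv> O_prime K z"

lemma K_0: "0 \<in> K" and K_1: "1 \<in> K" using subf unfolding is_subfield_def by auto
lemma K_add: "a \<in> K \<Longrightarrow> b \<in> K \<Longrightarrow> a + b \<in> K" using subf unfolding is_subfield_def by auto
lemma K_diff: "a \<in> K \<Longrightarrow> b \<in> K \<Longrightarrow> a - b \<in> K" using subf unfolding is_subfield_def by auto
lemma K_mult: "a \<in> K \<Longrightarrow> b \<in> K \<Longrightarrow> a * b \<in> K" using subf unfolding is_subfield_def by auto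
lemma K_inv: "a \<in> K \<Longrightarrow> inverse a \<in> K"
  using subf unfolding is_subfield_def by (cases "a = 0") auto

lemma K_of_nat: "of_nat m \<in> K"
  by (induction m) (auto simp: K_0 K_1 K_add)

lemma K_of_int: "of_int k \<in> K"
proof (cases k rule: int_cases)
  case (nonneg m) then show ?thesis using K_of_nat by simp
next
  case (neg m) then show ?thesis using K_diff[OF K_0 K_of_nat[of "Suc m"]] by simp
qed

lemma OK_K: "a \<in> OK \<Longrightarrow> a \<in> K" unfolding ring_of_integers_def by auto
lemma OK_add: "a \<in> OK \<Longrightarrow> b \<in> OK \<Longrightarrow> a + b \<in> OK"
  unfolding ring_of_integers_def using alg_int_add_mult K_add by blast
lemma OK_mult: "a \<in> OK \<Longrightarrow> b \<in> OK \<Longrightarrow> a * b \<in> OK"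
  unfolding ring_of_integers_def using alg_int_add_mult K_mult by blast
lemma OK_diff: "a \<in> OK \<Longrightarrow> b \<in> OK \<Longrightarrow> a - b \<in> OK"
  unfolding ring_of_integers_def using alg_int_minus K_diff by blast
lemma OK_of_int: "of_int k \<in> OK"
  unfolding ring_of_integers_def using alg_int_of_int K_of_int by blast
lemma OK_0: "0 \<in> OK" using OK_of_int[of 0] by simp
lemma OK_1: "1 \<in> OK" using OK_of_int[of 1] by simp
lemma OK_uminus: "a \<in> OK \<Longrightarrow> - a \<in> OK" using OK_diff[OF OK_0] by fastforce
lemma OK_sum: "finite I \<Longrightarrow> (\<And>i. i \<in> I \<Longrightarrow> f i \<in> OK) \<Longrightarrow> sum f I \<in> OK"
  by (induction I rule: finite_induct) (auto simp: OK_0 OK_add)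

lemma G_subring: "is_subring G" using order unfolding is_order_def by auto
lemma G_1: "1 \<in> G" using G_subring unfolding is_subring_def by auto
lemma G_add: "a \<in> G \<Longrightarrow> b \<in> G \<Longrightarrow> a + b \<in> G" using G_subring unfolding is_subring_def by auto
lemma G_diff: "a \<in> G \<Longrightarrow> b \<in> G \<Longrightarrow> a - b \<in> G" using G_subring unfolding is_subring_def by auto
lemma G_mult: "a \<in> G \<Longrightarrow> b \<in> G \<Longrightarrow> a * b \<in> G" using G_subring unfolding is_subring_def by auto
lemma G_0: "0 \<in> G" using G_diff[OF G_1 G_1] by simp
lemma G_uminus: "a \<in> G \<Longrightarrow> - a \<in> G" using G_diff[OF G_0] by fastforce
lemma G_of_nat: "of_nat m \<in> G"
  by (induction m) (auto simp: G_0 G_1 G_add)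
lemma G_of_int: "of_int k \<in> G"
proof (cases k rule: int_cases)
  case (nonneg m) then show ?thesis using G_of_nat by simp
next
  case (neg m) then show ?thesis using G_diff[OF G_0 G_of_nat[of "Suc m"]] by simp
qed
lemma G_intmult: "a \<in> G \<Longrightarrow> of_int k * a \<in> G" using G_mult[OF G_of_int] by blast

lemma G_denom: "\<exists>m::int. m \<noteq> 0 \<and> of_int m * x \<in> G" using order unfolding is_order_def by auto

lemma G_alg_int: assumes "x \<in> G" shows "algebraic_integer x"
proof -
  obtain B where B: "finite B" "B \<subseteq> G" "G = {(\<Sum>b\<in>B. of_int (c b) * b) | c. True}"
    using order unfolding is_order_def by blast
  then have GB: "G = zspan B" unfolding zspan_def by simp
  have "\<exists>b\<in>B. b \<noteq> 0"
  proof (rule ccontr)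
    assume "\<not> (\<exists>b\<in>B. b \<noteq> 0)"
    then have "\<forall>y\<in>G. y = 0" unfolding GB zspan_def by (auto intro!: sum.neutral)
    then show False using G_1 by auto
  qed
  then obtain b where "b \<in> B" "b \<noteq> 0" by blast
  moreover have "\<forall>w\<in>B. x * w \<in> zspan B" using B(2) assms G_mult GB by blast
  ultimately show ?thesis using eigen_alg_int[OF B(1)] by blast
qed

lemma K_denom: assumes "k \<in> K" shows "\<exists>N::int. N \<noteq> 0 \<and> of_int N * k \<in> OK"
proof -
  obtain m :: int where "m \<noteq> 0" "of_int m * k \<in> G" using G_denom by blast
  moreover have "of_int m * k \<in> K" using K_mult[OF K_of_int assms] .
  ultimately show ?thesis using G_alg_int unfolding ring_of_integers_def by blast
qed

lemma Op_least: "is_subring S \<Longrightarrow> (\<lambda>a. of_int z * a) ` OK \<subseteq> S \<Longrightarrow> Op \<subseteq> S"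
  unfolding O_prime_def by blast

lemma Op_zOK: assumes "b \<in> OK" shows "of_int z * b \<in> Op"
  unfolding O_prime_def
proof (rule InterI)
  fix S assume "S \<in> {S. is_subring S \<and> (\<lambda>a. of_int z * a) ` OK \<subseteq> S}"
  then have "(\<lambda>a. of_int z * a) ` OK \<subseteq> S" by simp
  then show "of_int z * b \<in> S" using assms by (simp add: image_subset_iff)
qed

lemma Op_OK: "Op \<subseteq> OK"
proof (rule Op_least)
  show "is_subring OK" unfolding is_subring_def by (simp add: OK_1 OK_add OK_diff OK_mult)
  show "(\<lambda>a. of_int z * a) ` OK \<subseteq> OK" using OK_mult[OF OK_of_int] by (simp add: image_subset_iff)
qed

lemma phi_1: "\<phi> 1 = 1" using hom unfolding ring_morphism_on_def by auto
lemma phi_add: "a \<in> K \<Longrightarrow> b \<in> K \<Longrightarrow> \<phi> (a + b) = \<phi> a + \<phi> b"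
  using hom unfolding ring_morphism_on_def by auto
lemma phi_mult: "a \<in> K \<Longrightarrow> b \<in> K \<Longrightarrow> \<phi> (a * b) = \<phi> a * \<phi> b"
  using hom unfolding ring_morphism_on_def by auto
lemma phi_diff: assumes "a \<in> K" "b \<in> K" shows "\<phi> (a - b) = \<phi> a - \<phi> b"
proof -
  have "\<phi> (a - b + b) = \<phi> (a - b) + \<phi> b" using phi_add[OF K_diff[OF assms] assms(2)] .
  then show ?thesis by simp
qed
lemma phi_0: "\<phi> 0 = 0" using phi_diff[OF K_0 K_0] by simp
lemma phi_of_nat: "\<phi> (of_nat m) = of_nat m"
  by (induction m) (auto simp: phi_0 phi_1 phi_add K_of_nat K_1)
lemma phi_of_int: "\<phi> (of_int k) = of_int k"
proof (cases k rule: int_cases)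
  case (nonneg m) then show ?thesis using phi_of_nat by simp
next
  case (neg m) then show ?thesis using phi_diff[OF K_0 K_of_nat[of "Suc m"]] phi_0 phi_of_nat[of "Suc m"]
    by simp
qed

lemma phi_Op: assumes "a \<in> Op" shows "\<phi> a \<in> G"
proof -
  have "Op \<subseteq> {a \<in> OK. \<phi> a \<in> G}"
  proof (rule Op_least)
    show "is_subring {a \<in> OK. \<phi> a \<in> G}" unfolding is_subring_def
    proof (intro conjI ballI)
      show "1 \<in> {a \<in> OK. \<phi> a \<in> G}" using OK_1 phi_1 G_1 by simp
      fix a b assume a: "a \<in> {a \<in> OK. \<phi> a \<in> G}" and b: "b \<in> {a \<in> OK. \<phi> a \<in> G}"
      then have k: "a \<in> K" "b \<in> K" using OK_K by auto
      show "a + b \<in> {a \<in> OK. \<phi> a \<in> G}" using a b OK_add G_add phi_add[OF k] by simp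
      show "a - b \<in> {a \<in> OK. \<phi> a \<in> G}" using a b OK_diff G_diff phi_diff[OF k] by simp
      show "a * b \<in> {a \<in> OK. \<phi> a \<in> G}" using a b OK_mult G_mult phi_mult[OF k] by simp
    qed
    show "(\<lambda>a. of_int z * a) ` OK \<subseteq> {a \<in> OK. \<phi> a \<in> G}"
      using zG OK_mult[OF OK_of_int] by (auto simp add: image_subset_iff)
  qed
  then show ?thesis using assms by blast
qed

lemma cring_G: "cring (subring_ring G)"
proof (rule cringI)
  show "abelian_group (subring_ring G)"
  proof (rule abelian_groupI)
    fix x assume "x \<in> carrier (subring_ring G)"
    then show "\<exists>y\<in>carrier (subring_ring G). y \<oplus>\<^bsub>subring_ring G\<^esub> x = \<zero>\<^bsub>subring_ring G\<^esub>"
      by (intro bexI[of _ "- x"]) (auto simp: subring_ring_def G_uminus)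
  qed (simp_all add: subring_ring_def G_add G_0 add.assoc add.commute)
  show "comm_monoid (subring_ring G)"
    by (rule comm_monoidI) (simp_all add: subring_ring_def G_mult G_1 mult.assoc mult.commute)
qed (simp add: subring_ring_def distrib_right)

end

lemma iso_comp:
  assumes "module_iso S M N f" "module_iso S N P g"
  shows "module_iso S M P (g \<circ> f)"
proof -
  have bf: "bij_betw f (carrier M) (carrier N)" and bg: "bij_betw g (carrier N) (carrier P)"
    using assms unfolding module_iso_def by auto
  have fin: "\<And>x. x \<in> carrier M \<Longrightarrow> f x \<in> carrier N" using bf bij_betwE by blast
  show ?thesis unfolding module_iso_def
  proof (intro conjI ballI)
    show "bij_betw (g \<circ> f) (carrier M) (carrier P)" using bf bg bij_betw_trans by blast
    fix x y assume x: "x \<in> carrier M" and y: "y \<in> carrier M"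
    show "(g \<circ> f) (x \<oplus>\<^bsub>M\<^esub> y) = (g \<circ> f) x \<oplus>\<^bsub>P\<^esub> (g \<circ> f) y"
      using assms x y fin unfolding module_iso_def by simp
  next
    fix a x assume a: "a \<in> S" and x: "x \<in> carrier M"
    show "(g \<circ> f) (a \<odot>\<^bsub>M\<^esub> x) = a \<odot>\<^bsub>P\<^esub> (g \<circ> f) x"
      using assms a x fin unfolding module_iso_def by simp
  qed
qed

lemma iso_inv:
  assumes iso: "module_iso S M N f"
    and cla: "\<And>x y. x \<in> carrier M \<Longrightarrow> y \<in> carrier M \<Longrightarrow> x \<oplus>\<^bsub>M\<^esub> y \<in> carrier M"
    and cls: "\<And>a x. a \<in> S \<Longrightarrow> x \<in> carrier M \<Longrightarrow> a \<odot>\<^bsub>M\<^esub> x \<in> carrier M"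
  shows "module_iso S N M (the_inv_into (carrier M) f)"
proof -
  let ?g = "the_inv_into (carrier M) f"
  have bf: "bij_betw f (carrier M) (carrier N)" using iso unfolding module_iso_def by auto
  then have inj: "inj_on f (carrier M)" and im: "f ` carrier M = carrier N"
    unfolding bij_betw_def by auto
  have gf: "\<And>x. x \<in> carrier M \<Longrightarrow> ?g (f x) = x" using the_inv_into_f_f[OF inj] by blast
  show ?thesis unfolding module_iso_def
  proof (intro conjI ballI)
    show "bij_betw ?g (carrier N) (carrier M)" using bij_betw_the_inv_into[OF bf] .
    fix x y assume x: "x \<in> carrier N" and y: "y \<in> carrier N"
    then obtain x' y' where x': "x' \<in> carrier M" "x = f x'" and y': "y' \<in> carrier M" "y = f y'"
      using im by blast
    have "x \<oplus>\<^bsub>N\<^esub> y = f (x' \<oplus>\<^bsub>M\<^esub> y')" using iso x' y' unfolding module_iso_def by simp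
    then show "?g (x \<oplus>\<^bsub>N\<^esub> y) = ?g x \<oplus>\<^bsub>M\<^esub> ?g y"
      using gf x' y' cla by simp
  next
    fix a x assume a: "a \<in> S" and x: "x \<in> carrier N"
    then obtain x' where x': "x' \<in> carrier M" "x = f x'" using im by blast
    have "a \<odot>\<^bsub>N\<^esub> x = f (a \<odot>\<^bsub>M\<^esub> x')" using iso x' a unfolding module_iso_def by simp
    then show "?g (a \<odot>\<^bsub>N\<^esub> x) = a \<odot>\<^bsub>M\<^esub> ?g x"
      using gf x' cls a by simp
  qed
qed

lemma iso_mono: "module_iso S M N f \<Longrightarrow> S' \<subseteq> S \<Longrightarrow> module_iso S' M N f"
  unfolding module_iso_def by blast

lemma iso_restrict:
  assumes "module_iso S M N f" "\<phi> ` S' \<subseteq> S"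
  shows "module_iso S' (restrict_scalars \<phi> M) (restrict_scalars \<phi> N) f"
  using assms unfolding module_iso_def restrict_scalars_def by (auto simp: image_subset_iff)

lemma iso_id: "module_iso S M M id"
  unfolding module_iso_def by simp

lemma quot_bij:
  assumes RA: "R \<subseteq> A \<times> A" and eqB: "equiv B S" and FB: "\<And>a. a \<in> A \<Longrightarrow> F a \<in> B"
    and RS: "\<And>a a'. a \<in> A \<Longrightarrow> a' \<in> A \<Longrightarrow> (a, a') \<in> R \<longleftrightarrow> (F a, F a') \<in> S"
    and surj: "\<And>b. b \<in> B \<Longrightarrow> \<exists>a\<in>A. (F a, b) \<in> S"
  shows "\<exists>f. bij_betw f (A // R) (B // S)"
proof -
  have eqA: "equiv A R"
  proof (rule equivI)
    show "R \<subseteq> A \<times> A" by (rule RA)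
    show "refl_on A R" unfolding refl_on_def
    proof
      fix a assume a: "a \<in> A"
      then have "(F a, F a) \<in> S" using eqB FB unfolding equiv_def refl_on_def by blast
      then show "(a, a) \<in> R" using RS a by blast
    qed
    show "sym R" unfolding sym_def
    proof (intro allI impI)
      fix a b assume ab: "(a, b) \<in> R"
      then have ab': "a \<in> A" "b \<in> A" using RA by auto
      then have "(F a, F b) \<in> S" using RS ab by blast
      then have "(F b, F a) \<in> S" using eqB unfolding equiv_def sym_def by blast
      then show "(b, a) \<in> R" using RS ab' by blast
    qed
    show "trans R" unfolding trans_def
    proof (intro allI impI)
      fix a b c assume ab: "(a, b) \<in> R" and bc: "(b, c) \<in> R"
      then have abc: "a \<in> A" "b \<in> A" "c \<in> A" using RA by auto
      then have "(F a, F b) \<in> S" "(F b, F c) \<in> S" using RS ab bc by blast+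
      then have "(F a, F c) \<in> S" using eqB unfolding equiv_def trans_def by blast
      then show "(a, c) \<in> R" using RS abc by blast
    qed
  qed
  define f where "f Q = S `` {F (SOME a. a \<in> Q)}" for Q
  have rep: "(SOME a. a \<in> Q) \<in> Q" if "Q \<in> A // R" for Q
    using that eqA by (metis equiv_class_self quotientE someI_ex)
  have QA: "Q \<subseteq> A" if "Q \<in> A // R" for Q
    using that eqA by (metis Union_quotient Union_upper)
  have fa: "f (R `` {a}) = S `` {F a}" if "a \<in> A" for a
  proof -
    have Q: "R `` {a} \<in> A // R" using that by (rule quotientI)
    let ?s = "SOME x. x \<in> R `` {a}"
    have "?s \<in> R `` {a}" using rep[OF Q] .
    then have "(a, ?s) \<in> R" by simp
    then have "(F a, F ?s) \<in> S" using RS RA that by blast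
    then show ?thesis unfolding f_def using eqB by (metis equiv_class_eq_iff)
  qed
  show ?thesis
  proof (intro exI[of _ f] bij_betw_imageI)
    show "inj_on f (A // R)"
    proof (rule inj_onI)
      fix Q1 Q2 assume Q1: "Q1 \<in> A // R" and Q2: "Q2 \<in> A // R" and e: "f Q1 = f Q2"
      obtain a1 where a1: "a1 \<in> A" "Q1 = R `` {a1}" using Q1 by (rule quotientE) blast
      obtain a2 where a2: "a2 \<in> A" "Q2 = R `` {a2}" using Q2 by (rule quotientE) blast
      have "S `` {F a1} = S `` {F a2}" using e fa a1 a2 by simp
      then have "(F a1, F a2) \<in> S" using eqB FB a1 a2 by (metis eq_equiv_class_iff)
      then have "(a1, a2) \<in> R" using RS a1 a2 by blast
      then show "Q1 = Q2" using a1 a2 eqA by (metis equiv_class_eq_iff)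
    qed
    show "f ` (A // R) = B // S"
    proof
      show "f ` (A // R) \<subseteq> B // S"
      proof
        fix X assume "X \<in> f ` (A // R)"
        then obtain a where a: "a \<in> A" "X = f (R `` {a})" by (auto elim!: quotientE)
        then show "X \<in> B // S" using fa[OF a(1)] quotientI[OF FB[OF a(1)]] by simp
      qed
      show "B // S \<subseteq> f ` (A // R)"
      proof
        fix X assume "X \<in> B // S"
        then obtain b where b: "b \<in> B" "X = S `` {b}" by (rule quotientE) blast
        obtain a where a: "a \<in> A" "(F a, b) \<in> S" using surj[OF b(1)] by blast
        have "S `` {F a} = S `` {b}" using a eqB by (metis equiv_class_eq_iff)
        then have "X = f (R `` {a})" using fa[OF a(1)] b by simp
        then show "X \<in> f ` (A // R)" by (rule image_eqI[OF _ quotientI[OF a(1)]])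
      qed
    qed
  qed
qed

lemma countable_vec:
  assumes "number_field_type TYPE('a::field_char_0)"
  shows "\<exists>enc :: 'a vec \<Rightarrow> nat. inj enc"
proof -
  obtain B :: "'a set" where B: "finite B" "\<forall>x::'a. \<exists>c. x = (\<Sum>b\<in>B. of_rat (c b) * b)"
    using assms unfolding number_field_type_def by blast
  obtain bs where bs: "set bs = B" using B(1) finite_list by blast
  obtain C where C: "\<And>x. x = (\<Sum>b\<in>B. of_rat (C x b) * b)"
    using B(2) choice[of "\<lambda>x c. x = (\<Sum>b\<in>B. of_rat (c b) * b)"] by blast
  define g where "g x = map (C x) bs" for x
  have ig: "inj g"
  proof (rule injI)
    fix x y assume "g x = g y"
    then have "\<forall>b\<in>B. C x b = C y b" unfolding g_def using bs by (metis map_eq_conv)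
    then have "(\<Sum>b\<in>B. of_rat (C x b) * b) = (\<Sum>b\<in>B. of_rat (C y b) * b)" by simp
    then show "x = y" using C[of x] C[of y] by simp
  qed
  define enc where "enc v = to_nat (map g (list_of_vec v))" for v :: "'a vec"
  have "inj enc"
  proof (rule injI)
    fix v w assume "enc v = enc w"
    then have "map g (list_of_vec v) = map g (list_of_vec w)" unfolding enc_def by simp
    then have "list_of_vec v = list_of_vec w" using inj_mapI[OF ig] by (simp add: inj_eq)
    then show "v = w" by (metis vec_list)
  qed
  then show ?thesis by blast
qed

definition tmod :: "('r, 'm) module \<Rightarrow> ('m \<Rightarrow> nat) \<Rightarrow> ('r, nat) module" where
  "tmod M e = \<lparr>carrier = e ` carrier M, monoid.mult = (\<lambda>_ _. e \<zero>\<^bsub>M\<^esub>), one = e \<zero>\<^bsub>M\<^esub>,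
     zero = e \<zero>\<^bsub>M\<^esub>,
     add = (\<lambda>a b. e (the_inv_into (carrier M) e a \<oplus>\<^bsub>M\<^esub> the_inv_into (carrier M) e b)),
     module.smult = (\<lambda>r a. e (r \<odot>\<^bsub>M\<^esub> the_inv_into (carrier M) e a))\<rparr>"

lemma tmod_iso:
  assumes "inj_on e (carrier M)"
  shows "module_iso UNIV M (tmod M e) e"
  unfolding module_iso_def tmod_def using assms
  by (auto simp: the_inv_into_f_f bij_betw_def)

lemma tmod_module:
  assumes M: "module R M" and inj: "inj_on e (carrier M)"
  shows "module R (tmod M e)"
proof -
  interpret M: module R M by (rule M)
  let ?d = "the_inv_into (carrier M) e"
  have de: "\<And>x. x \<in> carrier M \<Longrightarrow> ?d (e x) = x" using the_inv_into_f_f[OF inj] by blast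
  have carr: "carrier (tmod M e) = e ` carrier M" unfolding tmod_def by simp
  have add: "\<And>x y. x \<in> carrier M \<Longrightarrow> y \<in> carrier M \<Longrightarrow> e x \<oplus>\<^bsub>tmod M e\<^esub> e y = e (x \<oplus>\<^bsub>M\<^esub> y)"
    unfolding tmod_def using de by simp
  have sm: "\<And>a x. x \<in> carrier M \<Longrightarrow> a \<odot>\<^bsub>tmod M e\<^esub> e x = e (a \<odot>\<^bsub>M\<^esub> x)"
    unfolding tmod_def using de by simp
  have zero: "\<zero>\<^bsub>tmod M e\<^esub> = e \<zero>\<^bsub>M\<^esub>" unfolding tmod_def by simp
  show ?thesis
  proof (rule moduleI)
    show "cring R" by (rule M.is_cring)
    show "abelian_group (tmod M e)"
    proof (rule abelian_groupI)
      fix x y assume "x \<in> carrier (tmod M e)" "y \<in> carrier (tmod M e)"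
      then obtain x' y' where "x' \<in> carrier M" "y' \<in> carrier M" "x = e x'" "y = e y'" using carr by auto
      then show "x \<oplus>\<^bsub>tmod M e\<^esub> y \<in> carrier (tmod M e)" using add carr by simp
    next
      show "\<zero>\<^bsub>tmod M e\<^esub> \<in> carrier (tmod M e)" using zero carr by simp
    next
      fix x y w assume "x \<in> carrier (tmod M e)" "y \<in> carrier (tmod M e)" "w \<in> carrier (tmod M e)"
      then obtain x' y' w' where "x' \<in> carrier M" "y' \<in> carrier M" "w' \<in> carrier M" "x = e x'" "y = e y'" "w = e w'"
        using carr by auto
      then show "x \<oplus>\<^bsub>tmod M e\<^esub> y \<oplus>\<^bsub>tmod M e\<^esub> w = x \<oplus>\<^bsub>tmod M e\<^esub> (y \<oplus>\<^bsub>tmod M e\<^esub> w)"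
        using add by (simp add: M.a_assoc)
    next
      fix x y assume "x \<in> carrier (tmod M e)" "y \<in> carrier (tmod M e)"
      then obtain x' y' where "x' \<in> carrier M" "y' \<in> carrier M" "x = e x'" "y = e y'" using carr by auto
      then show "x \<oplus>\<^bsub>tmod M e\<^esub> y = y \<oplus>\<^bsub>tmod M e\<^esub> x" using add by (simp add: M.a_comm)
    next
      fix x assume "x \<in> carrier (tmod M e)"
      then obtain x' where "x' \<in> carrier M" "x = e x'" using carr by auto
      then show "\<zero>\<^bsub>tmod M e\<^esub> \<oplus>\<^bsub>tmod M e\<^esub> x = x" using add zero by simp
    next
      fix x assume "x \<in> carrier (tmod M e)"
      then obtain x' where x': "x' \<in> carrier M" "x = e x'" using carr by auto
      then have "e (\<ominus>\<^bsub>M\<^esub> x') \<oplus>\<^bsub>tmod M e\<^esub> x = \<zero>\<^bsub>tmod M e\<^esub>" using add zero by (simp add: M.l_neg)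
      moreover have "e (\<ominus>\<^bsub>M\<^esub> x') \<in> carrier (tmod M e)" using carr x' by simp
      ultimately show "\<exists>y\<in>carrier (tmod M e). y \<oplus>\<^bsub>tmod M e\<^esub> x = \<zero>\<^bsub>tmod M e\<^esub>" by blast
    qed
  next
    fix a x assume "a \<in> carrier R" "x \<in> carrier (tmod M e)"
    then show "a \<odot>\<^bsub>tmod M e\<^esub> x \<in> carrier (tmod M e)" using carr sm by auto
  next
    fix a b x assume "a \<in> carrier R" "b \<in> carrier R" "x \<in> carrier (tmod M e)"
    then show "(a \<oplus>\<^bsub>R\<^esub> b) \<odot>\<^bsub>tmod M e\<^esub> x = a \<odot>\<^bsub>tmod M e\<^esub> x \<oplus>\<^bsub>tmod M e\<^esub> b \<odot>\<^bsub>tmod M e\<^esub> x"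
      using carr sm add by (auto simp: M.smult_l_distr)
  next
    fix a x y assume "a \<in> carrier R" "x \<in> carrier (tmod M e)" "y \<in> carrier (tmod M e)"
    then show "a \<odot>\<^bsub>tmod M e\<^esub> (x \<oplus>\<^bsub>tmod M e\<^esub> y) = a \<odot>\<^bsub>tmod M e\<^esub> x \<oplus>\<^bsub>tmod M e\<^esub> a \<odot>\<^bsub>tmod M e\<^esub> y"
      using carr sm add by (auto simp: M.smult_r_distr)
  next
    fix a b x assume "a \<in> carrier R" "b \<in> carrier R" "x \<in> carrier (tmod M e)"
    then show "(a \<otimes>\<^bsub>R\<^esub> b) \<odot>\<^bsub>tmod M e\<^esub> x = a \<odot>\<^bsub>tmod M e\<^esub> (b \<odot>\<^bsub>tmod M e\<^esub> x)"
      using carr sm by (auto simp: M.smult_assoc1)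
  next
    fix x assume "x \<in> carrier (tmod M e)"
    then show "\<one>\<^bsub>R\<^esub> \<odot>\<^bsub>tmod M e\<^esub> x = x" using carr sm by auto
  qed
qed

lemma mat_unit:
  fixes A :: "'a::comm_ring_1 mat"
  assumes "A \<in> carrier_mat n n" "i < n" "j < n"
  shows "(A *\<^sub>v unit_vec n j) $ i = A $$ (i, j)"
proof -
  have "(A *\<^sub>v unit_vec n j) $ i = (\<Sum>k\<in>{0..<n}. A $$ (i, k) * (if k = j then 1 else 0))"
    using assms by (simp add: scalar_prod_def)
  also have "\<dots> = A $$ (i, j)" using assms(3) by (simp add: if_distrib sum.delta cong: if_cong)
  finally show ?thesis .
qed

lemma mat_eq_units:
  fixes A :: "'a::comm_ring_1 mat"
  assumes "A \<in> carrier_mat n n" "B \<in> carrier_mat n n"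
    and "\<And>j. j < n \<Longrightarrow> A *\<^sub>v unit_vec n j = B *\<^sub>v unit_vec n j"
  shows "A = B"
proof (rule eq_matI)
  fix i j assume "i < dim_row B" "j < dim_col B"
  then have ij: "i < n" "j < n" using assms by auto
  show "A $$ (i, j) = B $$ (i, j)"
    using mat_unit[OF assms(1) ij] mat_unit[OF assms(2) ij] assms(3)[OF ij(2)] by simp
qed (use assms in auto)

context NF begin

definition Sv :: "nat \<Rightarrow> 'a vec set" where
  "Sv n = {v \<in> carrier_vec n. \<forall>i<n. v $ i \<in> OK}"

lemma Sv_OKn: "carrier (OKn_module K n) = Sv n"
  unfolding OKn_module_def Sv_def by simp

lemma Sv_carrier: "v \<in> Sv n \<Longrightarrow> v \<in> carrier_vec n" unfolding Sv_def by simp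
lemma Sv_add: "v \<in> Sv n \<Longrightarrow> w \<in> Sv n \<Longrightarrow> v + w \<in> Sv n"
  unfolding Sv_def by (auto simp: OK_add)
lemma Sv_smult: "a \<in> OK \<Longrightarrow> v \<in> Sv n \<Longrightarrow> a \<cdot>\<^sub>v v \<in> Sv n"
  unfolding Sv_def by (auto simp: OK_mult)
lemma Sv_zero: "0\<^sub>v n \<in> Sv n"
  unfolding Sv_def by (auto simp: OK_0)
lemma Sv_uminus: "v \<in> Sv n \<Longrightarrow> - v \<in> Sv n"
  unfolding Sv_def by (auto simp: OK_uminus)
lemma Sv_unit: "j < n \<Longrightarrow> unit_vec n j \<in> Sv n"
  unfolding Sv_def by (auto simp: OK_0 OK_1)
lemma Sv_matR: assumes "A \<in> matR K n" "v \<in> Sv n" shows "A *\<^sub>v v \<in> Sv n"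
proof -
  have A: "A \<in> carrier_mat n n" using assms unfolding matR_def by simp
  show ?thesis unfolding Sv_def
  proof (intro CollectI conjI allI impI)
    show "A *\<^sub>v v \<in> carrier_vec n" using A Sv_carrier[OF assms(2)] by simp
    fix i assume i: "i < n"
    have "(A *\<^sub>v v) $ i = (\<Sum>k\<in>{0..<n}. A $$ (i, k) * v $ k)"
      using A i Sv_carrier[OF assms(2)] by (simp add: scalar_prod_def)
    also have "\<dots> \<in> OK" using assms i unfolding matR_def Sv_def
      by (intro OK_sum) (auto intro!: OK_mult)
    finally show "(A *\<^sub>v v) $ i \<in> OK" .
  qed
qed

definition matT :: "nat \<Rightarrow> ('a vec \<Rightarrow> 'a vec) \<Rightarrow> 'a mat" where
  "matT n T = mat n n (\<lambda>(i, j). T (unit_vec n j) $ i)"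

definition addS :: "nat \<Rightarrow> ('a vec \<Rightarrow> 'a vec) \<Rightarrow> bool" where
  "addS n T \<longleftrightarrow> (\<forall>v\<in>Sv n. T v \<in> Sv n) \<and> (\<forall>v\<in>Sv n. \<forall>w\<in>Sv n. T (v + w) = T v + T w)"

definition linS :: "nat \<Rightarrow> ('a vec \<Rightarrow> 'a vec) \<Rightarrow> bool" where
  "linS n T \<longleftrightarrow> addS n T \<and> (\<forall>b\<in>OK. \<forall>v\<in>Sv n. T (b \<cdot>\<^sub>v v) = b \<cdot>\<^sub>v T v)"

lemma addS_0: assumes "addS n T" shows "T (0\<^sub>v n) = 0\<^sub>v n"
proof -
  have c: "T (0\<^sub>v n) \<in> carrier_vec n" using assms Sv_zero Sv_carrier unfolding addS_def by blast
  have "T (0\<^sub>v n + 0\<^sub>v n) = T (0\<^sub>v n) + T (0\<^sub>v n)" using assms Sv_zero unfolding addS_def by blast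
  then have e: "T (0\<^sub>v n) = T (0\<^sub>v n) + T (0\<^sub>v n)" by simp
  show ?thesis
  proof (rule eq_vecI)
    fix i assume "i < dim_vec (0\<^sub>v n :: 'a vec)"
    then have i: "i < n" by simp
    have "T (0\<^sub>v n) $ i = (T (0\<^sub>v n) + T (0\<^sub>v n)) $ i" using e by simp
    then have "T (0\<^sub>v n) $ i = T (0\<^sub>v n) $ i + T (0\<^sub>v n) $ i" using i c by simp
    then show "T (0\<^sub>v n) $ i = (0\<^sub>v n :: 'a vec) $ i" using i by simp
  qed (use c in simp)
qed

lemma addS_nat: assumes "addS n T" "v \<in> Sv n"
  shows "T (of_nat m \<cdot>\<^sub>v v) = of_nat m \<cdot>\<^sub>v T v"
proof (induction m)
  case 0
  have "(0::'a) \<cdot>\<^sub>v v = 0\<^sub>v n" using Sv_carrier[OF assms(2)] by (intro eq_vecI) auto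
  then have "T (0 \<cdot>\<^sub>v v) = T (0\<^sub>v n)" by simp
  moreover have "T v \<in> carrier_vec n" using assms Sv_carrier unfolding addS_def by blast
  then have "(0::'a) \<cdot>\<^sub>v T v = 0\<^sub>v n" by (intro eq_vecI) auto
  ultimately show ?case using addS_0[OF assms(1)] by simp
next
  case (Suc m)
  have vc: "v \<in> carrier_vec n" using Sv_carrier[OF assms(2)] .
  have "of_nat (Suc m) \<cdot>\<^sub>v v = v + of_nat m \<cdot>\<^sub>v v" using vc by (simp add: add_smult_distrib_vec)
  moreover have "of_nat m \<cdot>\<^sub>v v \<in> Sv n" using Sv_smult[OF OK_of_int[of "int m"] assms(2)] by simp
  ultimately have "T (of_nat (Suc m) \<cdot>\<^sub>v v) = T v + T (of_nat m \<cdot>\<^sub>v v)"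
    using assms unfolding addS_def by simp
  also have "\<dots> = of_nat (Suc m) \<cdot>\<^sub>v T v"
    using Suc assms Sv_carrier unfolding addS_def by (simp add: add_smult_distrib_vec)
  finally show ?case .
qed

lemma addS_lin:
  assumes "addS n T"
    and zl: "\<And>b v. b \<in> OK \<Longrightarrow> v \<in> Sv n \<Longrightarrow> T ((of_int z * b) \<cdot>\<^sub>v v) = (of_int z * b) \<cdot>\<^sub>v T v"
  shows "linS n T"
  unfolding linS_def
proof (intro conjI ballI)
  show "addS n T" by fact
  fix b v assume b: "b \<in> OK" and v: "v \<in> Sv n"
  have bv: "b \<cdot>\<^sub>v v \<in> Sv n" using Sv_smult[OF b v] .
  have zz: "(of_int z :: 'a) = of_nat (nat z)" using zpos by simp
  have "of_int z \<cdot>\<^sub>v T (b \<cdot>\<^sub>v v) = T (of_int z \<cdot>\<^sub>v (b \<cdot>\<^sub>v v))"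
    using addS_nat[OF assms(1) bv, of "nat z"] zz by simp
  also have "\<dots> = T ((of_int z * b) \<cdot>\<^sub>v v)" by (simp add: smult_smult_assoc)
  also have "\<dots> = (of_int z * b) \<cdot>\<^sub>v T v" using zl[OF b v] .
  finally have e: "of_int z \<cdot>\<^sub>v T (b \<cdot>\<^sub>v v) = of_int z \<cdot>\<^sub>v (b \<cdot>\<^sub>v T v)"
    by (simp add: smult_smult_assoc)
  have c1: "T (b \<cdot>\<^sub>v v) \<in> carrier_vec n" using assms(1) bv Sv_carrier unfolding addS_def by blast
  have c2: "b \<cdot>\<^sub>v T v \<in> carrier_vec n" using assms(1) v Sv_carrier unfolding addS_def by auto
  have z0: "(of_int z :: 'a) \<noteq> 0" using zpos by simp
  show "T (b \<cdot>\<^sub>v v) = b \<cdot>\<^sub>v T v"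
  proof (rule eq_vecI)
    fix i assume "i < dim_vec (b \<cdot>\<^sub>v T v)"
    then have i: "i < n" using c2 by simp
    have "(of_int z \<cdot>\<^sub>v T (b \<cdot>\<^sub>v v)) $ i = (of_int z \<cdot>\<^sub>v (b \<cdot>\<^sub>v T v)) $ i" using e by simp
    then show "T (b \<cdot>\<^sub>v v) $ i = (b \<cdot>\<^sub>v T v) $ i" using i c1 c2 z0 by simp
  qed (use c1 c2 in simp)
qed

end

context NF begin

lemma linS_addS: "linS n T \<Longrightarrow> addS n T" unfolding linS_def by simp
lemma addS_S: "addS n T \<Longrightarrow> v \<in> Sv n \<Longrightarrow> T v \<in> Sv n" unfolding addS_def by simp
lemma addS_add: "addS n T \<Longrightarrow> v \<in> Sv n \<Longrightarrow> w \<in> Sv n \<Longrightarrow> T (v + w) = T v + T w"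
  unfolding addS_def by simp
lemma linS_smult: "linS n T \<Longrightarrow> b \<in> OK \<Longrightarrow> v \<in> Sv n \<Longrightarrow> T (b \<cdot>\<^sub>v v) = b \<cdot>\<^sub>v T v"
  unfolding linS_def by simp

lemma matT_carrier: "matT n T \<in> carrier_mat n n" unfolding matT_def by simp

lemma matT_R: assumes "addS n T" shows "matT n T \<in> matR K n"
  unfolding matR_def
proof (intro CollectI conjI allI impI)
  show "matT n T \<in> carrier_mat n n" by (rule matT_carrier)
  fix i j assume i: "i < n" and j: "j < n"
  have "T (unit_vec n j) \<in> Sv n" using addS_S[OF assms Sv_unit[OF j]] .
  then show "matT n T $$ (i, j) \<in> OK" using i j unfolding matT_def Sv_def by simp
qed

lemma matT_apply:
  assumes lin: "linS n T" and v: "v \<in> Sv n"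
  shows "matT n T *\<^sub>v v = T v"
proof -
  have ad: "addS n T" using lin by (rule linS_addS)
  have vc: "v \<in> carrier_vec n" using Sv_carrier[OF v] .
  define tr where "tr k = vec n (\<lambda>i. if i < k then v $ i else 0)" for k
  have trS: "tr k \<in> Sv n" for k using v unfolding tr_def Sv_def by (auto simp: OK_0)
  have Tu: "T (unit_vec n j) \<in> carrier_vec n" if "j < n" for j
    using Sv_carrier[OF addS_S[OF ad Sv_unit[OF that]]] .
  have claim: "T (tr k) = vec n (\<lambda>i. \<Sum>j<k. T (unit_vec n j) $ i * v $ j)" if "k \<le> n" for k
    using that
  proof (induction k)
    case 0
    have "tr 0 = 0\<^sub>v n" unfolding tr_def by (intro eq_vecI) auto
    then show ?case using addS_0[OF ad] by (auto intro!: eq_vecI)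
  next
    case (Suc k)
    then have k: "k < n" by simp
    have "tr (Suc k) = tr k + v $ k \<cdot>\<^sub>v unit_vec n k"
      unfolding tr_def using k by (intro eq_vecI) (auto simp: less_Suc_eq)
    moreover have vk: "v $ k \<in> OK" using v k unfolding Sv_def by simp
    ultimately have "T (tr (Suc k)) = T (tr k) + v $ k \<cdot>\<^sub>v T (unit_vec n k)"
      using addS_add[OF ad trS Sv_smult[OF vk Sv_unit[OF k]]] linS_smult[OF lin vk Sv_unit[OF k]]
      by simp
    also have "\<dots> = vec n (\<lambda>i. \<Sum>j<Suc k. T (unit_vec n j) $ i * v $ j)"
      using Suc.IH k Tu[OF k] by (intro eq_vecI) (auto simp: mult.commute)
    finally show ?case .
  qed
  have "tr n = v" unfolding tr_def using vc by (intro eq_vecI) auto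
  then have Tv: "T v = vec n (\<lambda>i. \<Sum>j<n. T (unit_vec n j) $ i * v $ j)" using claim[of n] by simp
  show ?thesis
  proof (rule eq_vecI)
    fix i assume "i < dim_vec (T v)"
    then have i: "i < n" using Tv by simp
    have "(matT n T *\<^sub>v v) $ i = (\<Sum>j\<in>{0..<n}. T (unit_vec n j) $ i * v $ j)"
      using i vc unfolding matT_def by (simp add: scalar_prod_def)
    then show "(matT n T *\<^sub>v v) $ i = T v $ i" using Tv i by (simp add: atLeast0LessThan)
  qed (use Tv in \<open>simp add: matT_def\<close>)
qed

end

context NF begin

lemma rho_carrier: "ring_hom_GR G K n \<rho> \<Longrightarrow> x \<in> G \<Longrightarrow> \<rho> x \<in> carrier_mat n n"
  unfolding ring_hom_GR_def matR_def by auto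
lemma rho_matR: "ring_hom_GR G K n \<rho> \<Longrightarrow> x \<in> G \<Longrightarrow> \<rho> x \<in> matR K n"
  unfolding ring_hom_GR_def by auto
lemma rho_add: "ring_hom_GR G K n \<rho> \<Longrightarrow> x \<in> G \<Longrightarrow> y \<in> G \<Longrightarrow> \<rho> (x + y) = \<rho> x + \<rho> y"
  unfolding ring_hom_GR_def by auto
lemma rho_mult: "ring_hom_GR G K n \<rho> \<Longrightarrow> x \<in> G \<Longrightarrow> y \<in> G \<Longrightarrow> \<rho> (x * y) = \<rho> x * \<rho> y"
  unfolding ring_hom_GR_def by auto
lemma rho_1: "ring_hom_GR G K n \<rho> \<Longrightarrow> \<rho> 1 = 1\<^sub>m n"
  unfolding ring_hom_GR_def by auto

lemma rho_uminus:
  assumes rh: "ring_hom_GR G K n \<rho>" and y: "y \<in> G"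
  shows "\<rho> (- y) = (-1) \<cdot>\<^sub>m \<rho> y"
proof -
  have c1: "\<rho> (- y) \<in> carrier_mat n n" using rho_carrier[OF rh G_uminus[OF y]] .
  have c2: "\<rho> y \<in> carrier_mat n n" using rho_carrier[OF rh y] .
  have c0: "\<rho> 0 \<in> carrier_mat n n" using rho_carrier[OF rh G_0] .
  have e0: "\<rho> 0 = \<rho> 0 + \<rho> 0" using rho_add[OF rh G_0 G_0] by simp
  have e: "\<rho> 0 = \<rho> (- y) + \<rho> y" using rho_add[OF rh G_uminus[OF y] y] by simp
  show ?thesis
  proof (rule eq_matI)
    fix i j assume "i < dim_row ((-1) \<cdot>\<^sub>m \<rho> y)" "j < dim_col ((-1) \<cdot>\<^sub>m \<rho> y)"
    then have ij: "i < n" "j < n" using c2 by auto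
    have "\<rho> 0 $$ (i, j) = (\<rho> 0 + \<rho> 0) $$ (i, j)" by (simp only: e0[symmetric])
    also have "\<dots> = \<rho> 0 $$ (i, j) + \<rho> 0 $$ (i, j)" using ij c0 by simp
    finally have "\<rho> 0 $$ (i, j) = \<rho> 0 $$ (i, j) + \<rho> 0 $$ (i, j)" .
    then have z: "\<rho> 0 $$ (i, j) = 0" by (simp only: add_cancel_right_right)
    have "\<rho> 0 $$ (i, j) = (\<rho> (- y) + \<rho> y) $$ (i, j)" by (simp only: e[symmetric])
    also have "\<dots> = \<rho> (- y) $$ (i, j) + \<rho> y $$ (i, j)" using ij c1 c2 by simp
    finally have "\<rho> (- y) $$ (i, j) + \<rho> y $$ (i, j) = 0" using z by simp
    then have "\<rho> (- y) $$ (i, j) = - \<rho> y $$ (i, j)" by (simp only: add_eq_0_iff2)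
    then show "\<rho> (- y) $$ (i, j) = ((-1) \<cdot>\<^sub>m \<rho> y) $$ (i, j)"
      using ij c2 by simp
  qed (use c1 c2 in auto)
qed

lemma rho_nat:
  assumes rh: "ring_hom_GR G K n \<rho>" and x: "x \<in> G"
  shows "\<rho> (of_nat m * x) = of_nat m \<cdot>\<^sub>m \<rho> x"
proof (induction m)
  case 0
  have "\<rho> 0 = \<rho> (- x) + \<rho> x" using rho_add[OF rh G_uminus[OF x] x] by simp
  also have "\<dots> = 0 \<cdot>\<^sub>m \<rho> x" unfolding rho_uminus[OF rh x] using rho_carrier[OF rh x]
    by (intro eq_matI) auto
  finally show ?case by simp
next
  case (Suc m)
  have mx: "of_nat m * x \<in> G" using G_intmult[OF x, of "int m"] by simp
  have "\<rho> (of_nat (Suc m) * x) = \<rho> (x + of_nat m * x)" by (simp add: algebra_simps)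
  also have "\<dots> = \<rho> x + of_nat m \<cdot>\<^sub>m \<rho> x" using rho_add[OF rh x mx] Suc by simp
  also have "\<dots> = of_nat (Suc m) \<cdot>\<^sub>m \<rho> x" using rho_carrier[OF rh x]
    by (intro eq_matI) (auto simp: algebra_simps)
  finally show ?case .
qed

lemma rho_int:
  assumes rh: "ring_hom_GR G K n \<rho>" and x: "x \<in> G"
  shows "\<rho> (of_int k * x) = of_int k \<cdot>\<^sub>m \<rho> x"
proof (cases k rule: int_cases)
  case (nonneg m) then show ?thesis using rho_nat[OF rh x, of m] by simp
next
  case (neg m)
  have mx: "of_nat (Suc m) * x \<in> G" using G_intmult[OF x, of "int (Suc m)"] by simp
  have kk: "(of_int k :: 'a) = - of_nat (Suc m)" using neg by simp
  then have "of_int k * x = - (of_nat (Suc m) * x)" by (simp only: mult_minus_left)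
  then have "\<rho> (of_int k * x) = \<rho> (- (of_nat (Suc m) * x))" by simp
  also have "\<dots> = (-1) \<cdot>\<^sub>m (of_nat (Suc m) \<cdot>\<^sub>m \<rho> x)"
    by (simp only: rho_uminus[OF rh mx] rho_nat[OF rh x])
  also have "\<dots> = of_int k \<cdot>\<^sub>m \<rho> x" using rho_carrier[OF rh x]
    by (intro eq_matI) (auto simp: kk algebra_simps)
  finally show ?thesis .
qed

lemma rhoQ_eq:
  assumes rh: "ring_hom_GR G K n \<rho>" and m: "m \<noteq> 0" "of_int m * x \<in> G"
  shows "rho_Q G \<rho> x = (1 / of_int m) \<cdot>\<^sub>m \<rho> (of_int m * x)"
proof -
  define m0 where "m0 = (SOME m::int. m \<noteq> 0 \<and> of_int m * x \<in> G)"
  have m0: "m0 \<noteq> 0" "of_int m0 * x \<in> G" unfolding m0_def using someI_ex[OF G_denom[of x]] by auto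
  have r: "rho_Q G \<rho> x = (1 / of_int m0) \<cdot>\<^sub>m \<rho> (of_int m0 * x)"
    unfolding rho_Q_def m0_def Let_def by simp
  have "\<rho> (of_int m * (of_int m0 * x)) = \<rho> (of_int m0 * (of_int m * x))" by (simp add: algebra_simps)
  then have e: "of_int m \<cdot>\<^sub>m \<rho> (of_int m0 * x) = of_int m0 \<cdot>\<^sub>m \<rho> (of_int m * x)"
    using rho_int[OF rh m0(2)] rho_int[OF rh m(2)] by simp
  have c0: "\<rho> (of_int m0 * x) \<in> carrier_mat n n" using rho_carrier[OF rh m0(2)] .
  have c1: "\<rho> (of_int m * x) \<in> carrier_mat n n" using rho_carrier[OF rh m(2)] .
  show ?thesis unfolding r
  proof (rule eq_matI)
    fix i j assume "i < dim_row ((1 / of_int m) \<cdot>\<^sub>m \<rho> (of_int m * x))"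
      "j < dim_col ((1 / of_int m) \<cdot>\<^sub>m \<rho> (of_int m * x))"
    then have ij: "i < n" "j < n" using c1 by auto
    have "of_int m * \<rho> (of_int m0 * x) $$ (i, j) = of_int m0 * \<rho> (of_int m * x) $$ (i, j)"
      using arg_cong[OF e, of "\<lambda>A. A $$ (i, j)"] ij c0 c1 by simp
    then show "((1 / of_int m0) \<cdot>\<^sub>m \<rho> (of_int m0 * x)) $$ (i, j) =
        ((1 / of_int m) \<cdot>\<^sub>m \<rho> (of_int m * x)) $$ (i, j)"
      using ij c0 c1 m0(1) m(1) by (simp add: field_simps)
  qed (use c0 c1 in auto)
qed

lemma rhoQ_G: assumes rh: "ring_hom_GR G K n \<rho>" and x: "x \<in> G" shows "rho_Q G \<rho> x = \<rho> x"
proof -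
  have "(1::'a) \<cdot>\<^sub>m \<rho> x = \<rho> x" using rho_carrier[OF rh x] by (intro eq_matI) auto
  then show ?thesis using rhoQ_eq[OF rh, of 1 x] x by simp
qed

end

context NF begin

lemma Op_K: "a \<in> Op \<Longrightarrow> a \<in> K" using Op_OK OK_K by blast

lemma Hom_rh: "\<rho> \<in> Hom_phi G K n \<phi> \<Longrightarrow> ring_hom_GR G K n \<rho>"
  unfolding Hom_phi_def by simp

lemma Hom_scalar:
  assumes H: "\<rho> \<in> Hom_phi G K n \<phi>" and a: "a \<in> Op"
  shows "\<rho> (\<phi> a) = a \<cdot>\<^sub>m 1\<^sub>m n"
proof -
  have rh: "ring_hom_GR G K n \<rho>" and pc: "phi_compatible G K n \<phi> \<rho>" using H unfolding Hom_phi_def by auto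
  have "rho_Q G \<rho> (\<phi> a * 1) = a \<cdot>\<^sub>m rho_Q G \<rho> 1" using pc Op_K[OF a] unfolding phi_compatible_def by blast
  moreover have "rho_Q G \<rho> 1 = 1\<^sub>m n" using pc unfolding phi_compatible_def by blast
  moreover have "rho_Q G \<rho> (\<phi> a) = \<rho> (\<phi> a)" using rhoQ_G[OF rh phi_Op[OF a]] .
  ultimately show ?thesis by simp
qed

lemma smult_smult_mat: "(c::'b::comm_ring_1) \<cdot>\<^sub>m (d \<cdot>\<^sub>m A) = (c * d) \<cdot>\<^sub>m A"
  by (intro eq_matI) auto

lemma phi_compat_from:
  assumes rh: "ring_hom_GR G K n \<rho>" and sc: "\<And>a. a \<in> Op \<Longrightarrow> \<rho> (\<phi> a) = a \<cdot>\<^sub>m 1\<^sub>m n"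
  shows "phi_compatible G K n \<phi> \<rho>"
  unfolding phi_compatible_def
proof (intro conjI allI ballI)
  fix x
  obtain m :: int where m: "m \<noteq> 0" "of_int m * x \<in> G" using G_denom by blast
  have r: "rho_Q G \<rho> x = (1 / of_int m) \<cdot>\<^sub>m \<rho> (of_int m * x)" using rhoQ_eq[OF rh m] .
  have R: "\<rho> (of_int m * x) \<in> matR K n" using rho_matR[OF rh m(2)] .
  have im: "1 / of_int m \<in> K" using K_inv[OF K_of_int[of m]] by (simp add: divide_inverse)
  show "rho_Q G \<rho> x \<in> matK K n" unfolding r matK_def
  proof (intro CollectI conjI allI impI)
    show "(1 / of_int m) \<cdot>\<^sub>m \<rho> (of_int m * x) \<in> carrier_mat n n" using R unfolding matR_def by simp
    fix i j assume ij: "i < n" "j < n"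
    have "\<rho> (of_int m * x) $$ (i, j) \<in> K" using R ij OK_K unfolding matR_def by simp
    then have "(1 / of_int m) * \<rho> (of_int m * x) $$ (i, j) \<in> K" by (rule K_mult[OF im])
    moreover have "\<rho> (of_int m * x) \<in> carrier_mat n n" using R unfolding matR_def by simp
    ultimately show "((1 / of_int m) \<cdot>\<^sub>m \<rho> (of_int m * x)) $$ (i, j) \<in> K" using ij by simp
  qed
next
  show "rho_Q G \<rho> 1 = 1\<^sub>m n" using rhoQ_G[OF rh G_1] rho_1[OF rh] by simp
next
  fix x y
  obtain mx :: int where mx: "mx \<noteq> 0" "of_int mx * x \<in> G" using G_denom by blast
  obtain my :: int where my: "my \<noteq> 0" "of_int my * y \<in> G" using G_denom by blast
  define M where "M = mx * my"
  have M0: "M \<noteq> 0" unfolding M_def using mx my by simp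
  have Mx: "of_int M * x \<in> G" using G_intmult[OF mx(2), of my] unfolding M_def by (simp add: algebra_simps)
  have My: "of_int M * y \<in> G" using G_intmult[OF my(2), of mx] unfolding M_def by (simp add: algebra_simps)
  have Mxy: "of_int M * (x + y) \<in> G" using G_add[OF Mx My] by (simp add: algebra_simps)
  have "rho_Q G \<rho> (x + y) = (1 / of_int M) \<cdot>\<^sub>m \<rho> (of_int M * x + of_int M * y)"
    using rhoQ_eq[OF rh M0 Mxy] by (simp add: algebra_simps)
  also have "\<dots> = (1 / of_int M) \<cdot>\<^sub>m \<rho> (of_int M * x) + (1 / of_int M) \<cdot>\<^sub>m \<rho> (of_int M * y)"
    using rho_add[OF rh Mx My] add_smult_distrib_left_mat rho_carrier[OF rh Mx] rho_carrier[OF rh My]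
    by metis
  also have "\<dots> = rho_Q G \<rho> x + rho_Q G \<rho> y"
    using rhoQ_eq[OF rh M0 Mx] rhoQ_eq[OF rh M0 My] by simp
  finally show "rho_Q G \<rho> (x + y) = rho_Q G \<rho> x + rho_Q G \<rho> y" .
next
  fix x y
  obtain mx :: int where mx: "mx \<noteq> 0" "of_int mx * x \<in> G" using G_denom by blast
  obtain my :: int where my: "my \<noteq> 0" "of_int my * y \<in> G" using G_denom by blast
  define M where "M = mx * my"
  have M0: "M \<noteq> 0" unfolding M_def using mx my by simp
  have e: "of_int M * (x * y) = (of_int mx * x) * (of_int my * y)" unfolding M_def by (simp add: algebra_simps)
  have Mxy: "of_int M * (x * y) \<in> G" unfolding e using G_mult[OF mx(2) my(2)] .
  have ca: "\<rho> (of_int mx * x) \<in> carrier_mat n n" using rho_carrier[OF rh mx(2)] .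
  have cb: "\<rho> (of_int my * y) \<in> carrier_mat n n" using rho_carrier[OF rh my(2)] .
  have "rho_Q G \<rho> (x * y) = (1 / of_int M) \<cdot>\<^sub>m (\<rho> (of_int mx * x) * \<rho> (of_int my * y))"
    using rhoQ_eq[OF rh M0 Mxy] unfolding e rho_mult[OF rh mx(2) my(2)] .
  also have "\<dots> = ((1 / of_int mx) \<cdot>\<^sub>m \<rho> (of_int mx * x)) * ((1 / of_int my) \<cdot>\<^sub>m \<rho> (of_int my * y))"
  proof -
    let ?A = "\<rho> (of_int mx * x)" and ?B = "\<rho> (of_int my * y)"
    have "((1 / of_int mx) \<cdot>\<^sub>m ?A) * ((1 / of_int my) \<cdot>\<^sub>m ?B) = (1 / of_int mx) \<cdot>\<^sub>m (?A * ((1 / of_int my) \<cdot>\<^sub>m ?B))"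
      using mult_smult_assoc_mat[OF ca smult_carrier_mat[OF cb]] .
    also have "\<dots> = (1 / of_int mx) \<cdot>\<^sub>m ((1 / of_int my) \<cdot>\<^sub>m (?A * ?B))"
      using mult_smult_distrib[OF ca cb] by simp
    also have "\<dots> = (1 / of_int M) \<cdot>\<^sub>m (?A * ?B)" unfolding smult_smult_mat M_def by simp
    finally show ?thesis by simp
  qed
  also have "\<dots> = rho_Q G \<rho> x * rho_Q G \<rho> y"
    using rhoQ_eq[OF rh mx] rhoQ_eq[OF rh my] by simp
  finally show "rho_Q G \<rho> (x * y) = rho_Q G \<rho> x * rho_Q G \<rho> y" .
next
  fix k x assume k: "k \<in> K"
  obtain N :: int where N: "N \<noteq> 0" "of_int N * k \<in> OK" using K_denom[OF k] by blast
  obtain mx :: int where mx: "mx \<noteq> 0" "of_int mx * x \<in> G" using G_denom by blast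
  define a where "a = of_int z * (of_int N * k)"
  have aOp: "a \<in> Op" unfolding a_def using Op_zOK[OF N(2)] .
  have pa: "\<phi> a = of_int (z * N) * \<phi> k"
  proof -
    have "a = of_int (z * N) * k" unfolding a_def by (simp add: algebra_simps)
    then have "\<phi> a = \<phi> (of_int (z * N) * k)" by (rule arg_cong)
    also have "\<dots> = of_int (z * N) * \<phi> k" by (simp only: phi_mult[OF K_of_int k] phi_of_int)
    finally show ?thesis .
  qed
  have paG: "\<phi> a \<in> G" using phi_Op[OF aOp] .
  define M where "M = z * N * mx"
  have M0: "M \<noteq> 0" unfolding M_def using zpos N mx by simp
  have e: "of_int M * (\<phi> k * x) = \<phi> a * (of_int mx * x)" unfolding M_def pa by (simp add: algebra_simps)
  have MG: "of_int M * (\<phi> k * x) \<in> G" unfolding e using G_mult[OF paG mx(2)] .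
  have cb: "\<rho> (of_int mx * x) \<in> carrier_mat n n" using rho_carrier[OF rh mx(2)] .
  have "rho_Q G \<rho> (\<phi> k * x) = (1 / of_int M) \<cdot>\<^sub>m ((a \<cdot>\<^sub>m 1\<^sub>m n) * \<rho> (of_int mx * x))"
    using rhoQ_eq[OF rh M0 MG] unfolding e rho_mult[OF rh paG mx(2)] sc[OF aOp] .
  also have "\<dots> = (a / of_int M) \<cdot>\<^sub>m \<rho> (of_int mx * x)"
  proof -
    have "(a \<cdot>\<^sub>m 1\<^sub>m n) * \<rho> (of_int mx * x) = a \<cdot>\<^sub>m (1\<^sub>m n * \<rho> (of_int mx * x))"
      using mult_smult_assoc_mat[OF one_carrier_mat cb] .
    also have "\<dots> = a \<cdot>\<^sub>m \<rho> (of_int mx * x)" using cb by simp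
    finally show ?thesis by (simp add: smult_smult_mat)
  qed
  also have "\<dots> = k \<cdot>\<^sub>m ((1 / of_int mx) \<cdot>\<^sub>m \<rho> (of_int mx * x))"
  proof -
    have "a / of_int M = k * (1 / of_int mx)" unfolding a_def M_def using zpos N mx by (simp add: field_simps)
    then show ?thesis by (simp add: smult_smult_mat)
  qed
  also have "\<dots> = k \<cdot>\<^sub>m rho_Q G \<rho> x" using rhoQ_eq[OF rh mx] by simp
  finally show "rho_Q G \<rho> (\<phi> k * x) = k \<cdot>\<^sub>m rho_Q G \<rho> x" .
qed

end

lemma smult_mat_vec:
  fixes A :: "'a::comm_ring_1 mat"
  assumes "A \<in> carrier_mat n n" "v \<in> carrier_vec n"
  shows "(a \<cdot>\<^sub>m A) *\<^sub>v v = a \<cdot>\<^sub>v (A *\<^sub>v v)"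
  using assms by (intro eq_vecI) (auto simp: scalar_prod_def sum_distrib_left mult.assoc)

context NF begin

definition Vmod :: "nat \<Rightarrow> ('a \<Rightarrow> 'a mat) \<Rightarrow> ('a, 'a vec) module" where
  "Vmod n \<rho> = \<lparr>carrier = Sv n, monoid.mult = (\<lambda>_ _. 0\<^sub>v n), one = 0\<^sub>v n, zero = 0\<^sub>v n,
     add = (+), module.smult = (\<lambda>g v. \<rho> g *\<^sub>v v)\<rparr>"

lemma Vmod_simps: "carrier (Vmod n \<rho>) = Sv n" "add (Vmod n \<rho>) = (+)"
  "module.smult (Vmod n \<rho>) = (\<lambda>g v. \<rho> g *\<^sub>v v)" "zero (Vmod n \<rho>) = 0\<^sub>v n"
  unfolding Vmod_def by simp_all

lemma G_simps: "carrier (subring_ring G) = G" "add (subring_ring G) = (+)"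
  "monoid.mult (subring_ring G) = (\<lambda>a b. a * b)" "one (subring_ring G) = 1"
  unfolding subring_ring_def by simp_all

lemma V_module:
  assumes rh: "ring_hom_GR G K n \<rho>"
  shows "module (subring_ring G) (Vmod n \<rho>)"
proof (rule moduleI)
  show "cring (subring_ring G)" by (rule cring_G)
  show "abelian_group (Vmod n \<rho>)"
  proof (rule abelian_groupI)
    fix x assume x: "x \<in> carrier (Vmod n \<rho>)"
    then have "- x \<in> carrier (Vmod n \<rho>)" "- x \<oplus>\<^bsub>Vmod n \<rho>\<^esub> x = \<zero>\<^bsub>Vmod n \<rho>\<^esub>"
      using Sv_uminus Sv_carrier unfolding Vmod_simps by auto
    then show "\<exists>y\<in>carrier (Vmod n \<rho>). y \<oplus>\<^bsub>Vmod n \<rho>\<^esub> x = \<zero>\<^bsub>Vmod n \<rho>\<^esub>" by blast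
  qed (auto simp: Vmod_simps Sv_add Sv_zero dest: Sv_carrier intro: comm_add_vec assoc_add_vec)
next
  fix a x assume "a \<in> carrier (subring_ring G)" "x \<in> carrier (Vmod n \<rho>)"
  then show "a \<odot>\<^bsub>Vmod n \<rho>\<^esub> x \<in> carrier (Vmod n \<rho>)"
    using Sv_matR rho_matR[OF rh] unfolding Vmod_simps G_simps by auto
next
  fix a b x assume "a \<in> carrier (subring_ring G)" "b \<in> carrier (subring_ring G)" "x \<in> carrier (Vmod n \<rho>)"
  then show "(a \<oplus>\<^bsub>subring_ring G\<^esub> b) \<odot>\<^bsub>Vmod n \<rho>\<^esub> x = a \<odot>\<^bsub>Vmod n \<rho>\<^esub> x \<oplus>\<^bsub>Vmod n \<rho>\<^esub> b \<odot>\<^bsub>Vmod n \<rho>\<^esub> x"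
    unfolding Vmod_simps G_simps
    using rho_add[OF rh] rho_carrier[OF rh] Sv_carrier add_mult_distrib_mat_vec by metis
next
  fix a x y assume "a \<in> carrier (subring_ring G)" "x \<in> carrier (Vmod n \<rho>)" "y \<in> carrier (Vmod n \<rho>)"
  then show "a \<odot>\<^bsub>Vmod n \<rho>\<^esub> (x \<oplus>\<^bsub>Vmod n \<rho>\<^esub> y) = a \<odot>\<^bsub>Vmod n \<rho>\<^esub> x \<oplus>\<^bsub>Vmod n \<rho>\<^esub> a \<odot>\<^bsub>Vmod n \<rho>\<^esub> y"
    unfolding Vmod_simps G_simps
    using rho_carrier[OF rh] Sv_carrier mult_add_distrib_mat_vec by metis
next
  fix a b x assume "a \<in> carrier (subring_ring G)" "b \<in> carrier (subring_ring G)" "x \<in> carrier (Vmod n \<rho>)"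
  then show "(a \<otimes>\<^bsub>subring_ring G\<^esub> b) \<odot>\<^bsub>Vmod n \<rho>\<^esub> x = a \<odot>\<^bsub>Vmod n \<rho>\<^esub> (b \<odot>\<^bsub>Vmod n \<rho>\<^esub> x)"
    unfolding Vmod_simps G_simps
    using rho_mult[OF rh] rho_carrier[OF rh] Sv_carrier assoc_mult_mat_vec by metis
next
  fix x assume "x \<in> carrier (Vmod n \<rho>)"
  then show "\<one>\<^bsub>subring_ring G\<^esub> \<odot>\<^bsub>Vmod n \<rho>\<^esub> x = x"
    unfolding Vmod_simps G_simps using rho_1[OF rh] Sv_carrier by simp
qed

lemma V_iso_OKn:
  assumes H: "\<rho> \<in> Hom_phi G K n \<phi>"
  shows "module_iso Op (restrict_scalars \<phi> (Vmod n \<rho>)) (OKn_module K n) id"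
  unfolding module_iso_def
proof (intro conjI ballI)
  show "bij_betw id (carrier (restrict_scalars \<phi> (Vmod n \<rho>))) (carrier (OKn_module K n))"
    unfolding restrict_scalars_def Sv_OKn by (simp add: Vmod_simps)
  fix x y assume "x \<in> carrier (restrict_scalars \<phi> (Vmod n \<rho>))" "y \<in> carrier (restrict_scalars \<phi> (Vmod n \<rho>))"
  show "id (x \<oplus>\<^bsub>restrict_scalars \<phi> (Vmod n \<rho>)\<^esub> y) = id x \<oplus>\<^bsub>OKn_module K n\<^esub> id y"
    unfolding restrict_scalars_def by (simp add: Vmod_simps OKn_module_def)
next
  fix a x assume a: "a \<in> Op" and x: "x \<in> carrier (restrict_scalars \<phi> (Vmod n \<rho>))"
  then have xc: "x \<in> carrier_vec n" unfolding restrict_scalars_def by (simp add: Vmod_simps Sv_carrier)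
  have "\<rho> (\<phi> a) *\<^sub>v x = a \<cdot>\<^sub>v x"
    unfolding Hom_scalar[OF H a] using smult_mat_vec[OF one_carrier_mat xc] xc by simp
  then show "id (a \<odot>\<^bsub>restrict_scalars \<phi> (Vmod n \<rho>)\<^esub> x) = a \<odot>\<^bsub>OKn_module K n\<^esub> id x"
    unfolding restrict_scalars_def by (simp add: Vmod_simps OKn_module_def)
qed

lemma conj_iso:
  assumes c: "(\<rho>, \<sigma>) \<in> conj_rel G K n \<phi>"
  shows "\<exists>f. module_iso G (Vmod n \<rho>) (Vmod n \<sigma>) f"
proof -
  obtain u v where u: "u \<in> unitsR K n" and v: "v \<in> matR K n" and uv: "u * v = 1\<^sub>m n" "v * u = 1\<^sub>m n"
    and s: "\<sigma> = (\<lambda>x\<in>G. u * \<rho> x * v)" and H: "\<rho> \<in> Hom_phi G K n \<phi>"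
    using c unfolding conj_rel_def by blast
  have rh: "ring_hom_GR G K n \<rho>" using Hom_rh[OF H] .
  have uR: "u \<in> matR K n" using u unfolding unitsR_def by simp
  have uc: "u \<in> carrier_mat n n" and vc: "v \<in> carrier_mat n n" using uR v unfolding matR_def by auto
  show ?thesis
  proof (intro exI[of _ "\<lambda>w. u *\<^sub>v w"])
    show "module_iso G (Vmod n \<rho>) (Vmod n \<sigma>) (\<lambda>w. u *\<^sub>v w)" unfolding module_iso_def Vmod_simps
    proof (intro conjI ballI)
      show "bij_betw (\<lambda>w. u *\<^sub>v w) (Sv n) (Sv n)"
      proof (rule bij_betw_byWitness[where f'="\<lambda>w. v *\<^sub>v w"])
        show "\<forall>a\<in>Sv n. v *\<^sub>v (u *\<^sub>v a) = a"
          using uv uc vc Sv_carrier by (auto simp flip: assoc_mult_mat_vec)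
        show "\<forall>a\<in>Sv n. u *\<^sub>v (v *\<^sub>v a) = a"
          using uv uc vc Sv_carrier by (auto simp flip: assoc_mult_mat_vec)
        show "(\<lambda>w. u *\<^sub>v w) ` Sv n \<subseteq> Sv n" using Sv_matR[OF uR] by auto
        show "(\<lambda>w. v *\<^sub>v w) ` Sv n \<subseteq> Sv n" using Sv_matR[OF v] by auto
      qed
      fix x y assume "x \<in> Sv n" "y \<in> Sv n"
      then show "u *\<^sub>v (x + y) = u *\<^sub>v x + u *\<^sub>v y"
        using uc Sv_carrier mult_add_distrib_mat_vec by metis
    next
      fix g x assume g: "g \<in> G" and x: "x \<in> Sv n"
      have xc: "x \<in> carrier_vec n" using Sv_carrier[OF x] .
      have rc: "\<rho> g \<in> carrier_mat n n" using rho_carrier[OF rh g] .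
      have "\<sigma> g *\<^sub>v (u *\<^sub>v x) = (u * \<rho> g * v) *\<^sub>v (u *\<^sub>v x)" using g s by simp
      also have "\<dots> = (u * \<rho> g) *\<^sub>v (v *\<^sub>v (u *\<^sub>v x))"
        by (rule assoc_mult_mat_vec[OF mult_carrier_mat[OF uc rc] vc]) (use uc xc in simp)
      also have "\<dots> = u *\<^sub>v (\<rho> g *\<^sub>v (v *\<^sub>v (u *\<^sub>v x)))"
        by (rule assoc_mult_mat_vec[OF uc rc]) (use uc vc xc in simp)
      also have "\<dots> = u *\<^sub>v (\<rho> g *\<^sub>v ((v * u) *\<^sub>v x))"
        using assoc_mult_mat_vec[OF vc uc xc] by simp
      also have "\<dots> = u *\<^sub>v (\<rho> g *\<^sub>v x)" using uv xc by simp
      finally show "u *\<^sub>v (\<rho> g *\<^sub>v x) = \<sigma> g *\<^sub>v (u *\<^sub>v x)" by simp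
    qed
  qed
qed

end

context NF begin

lemma scalar_apply:
  assumes H: "\<rho> \<in> Hom_phi G K n \<phi>" and a: "a \<in> Op" and x: "x \<in> carrier_vec n"
  shows "\<rho> (\<phi> a) *\<^sub>v x = a \<cdot>\<^sub>v x"
  unfolding Hom_scalar[OF H a] using smult_mat_vec[OF one_carrier_mat x] x by simp

lemma iso_lin:
  assumes H1: "\<rho> \<in> Hom_phi G K n \<phi>" and H2: "\<sigma> \<in> Hom_phi G K n \<phi>"
    and iso: "module_iso G (Vmod n \<rho>) (Vmod n \<sigma>) h"
  shows "linS n h"
proof -
  have b: "bij_betw h (Sv n) (Sv n)" and ad: "\<And>x y. x \<in> Sv n \<Longrightarrow> y \<in> Sv n \<Longrightarrow> h (x + y) = h x + h y"
    and sm: "\<And>g x. g \<in> G \<Longrightarrow> x \<in> Sv n \<Longrightarrow> h (\<rho> g *\<^sub>v x) = \<sigma> g *\<^sub>v h x"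
    using iso unfolding module_iso_def Vmod_simps by auto
  have hS: "\<And>x. x \<in> Sv n \<Longrightarrow> h x \<in> Sv n" using b bij_betwE by blast
  have addS: "addS n h" unfolding addS_def using hS ad by blast
  show ?thesis
  proof (rule addS_lin[OF addS])
    fix c v assume c: "c \<in> OK" and v: "v \<in> Sv n"
    have a: "of_int z * c \<in> Op" using Op_zOK[OF c] .
    have "h ((of_int z * c) \<cdot>\<^sub>v v) = h (\<rho> (\<phi> (of_int z * c)) *\<^sub>v v)"
      using scalar_apply[OF H1 a Sv_carrier[OF v]] by simp
    also have "\<dots> = \<sigma> (\<phi> (of_int z * c)) *\<^sub>v h v" using sm[OF phi_Op[OF a] v] .
    also have "\<dots> = (of_int z * c) \<cdot>\<^sub>v h v" using scalar_apply[OF H2 a Sv_carrier[OF hS[OF v]]] .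
    finally show "h ((of_int z * c) \<cdot>\<^sub>v v) = (of_int z * c) \<cdot>\<^sub>v h v" .
  qed
qed

lemma V_closed_add: "x \<in> carrier (Vmod n \<rho>) \<Longrightarrow> y \<in> carrier (Vmod n \<rho>) \<Longrightarrow> x \<oplus>\<^bsub>Vmod n \<rho>\<^esub> y \<in> carrier (Vmod n \<rho>)"
  unfolding Vmod_simps by (rule Sv_add)

lemma V_closed_smult: "ring_hom_GR G K n \<rho> \<Longrightarrow> a \<in> G \<Longrightarrow> x \<in> carrier (Vmod n \<rho>) \<Longrightarrow> a \<odot>\<^bsub>Vmod n \<rho>\<^esub> x \<in> carrier (Vmod n \<rho>)"
  unfolding Vmod_simps using Sv_matR rho_matR by blast

lemma iso_conj:
  assumes H1: "\<rho> \<in> Hom_phi G K n \<phi>" and H2: "\<sigma> \<in> Hom_phi G K n \<phi>"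
    and iso: "module_iso G (Vmod n \<rho>) (Vmod n \<sigma>) h"
  shows "(\<rho>, \<sigma>) \<in> conj_rel G K n \<phi>"
proof -
  let ?h' = "the_inv_into (Sv n) h"
  have iso': "module_iso G (Vmod n \<sigma>) (Vmod n \<rho>) ?h'"
    using iso_inv[OF iso V_closed_add V_closed_smult[OF Hom_rh[OF H1]]] unfolding Vmod_simps .
  have l1: "linS n h" using iso_lin[OF H1 H2 iso] .
  have l2: "linS n ?h'" using iso_lin[OF H2 H1 iso'] .
  have b: "bij_betw h (Sv n) (Sv n)" using iso unfolding module_iso_def Vmod_simps by auto
  have sm: "\<And>g x. g \<in> G \<Longrightarrow> x \<in> Sv n \<Longrightarrow> h (\<rho> g *\<^sub>v x) = \<sigma> g *\<^sub>v h x"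
    using iso unfolding module_iso_def Vmod_simps by auto
  have hh': "\<And>y. y \<in> Sv n \<Longrightarrow> h (?h' y) = y" using f_the_inv_into_f_bij_betw[OF b] by blast
  have inj: "inj_on h (Sv n)" using b by (simp add: bij_betw_def)
  have h'h: "\<And>y. y \<in> Sv n \<Longrightarrow> ?h' (h y) = y" by (rule the_inv_into_f_f[OF inj])
  have hS: "\<And>x. x \<in> Sv n \<Longrightarrow> h x \<in> Sv n" using bij_betwE[OF b] by simp
  have h'S: "\<And>x. x \<in> Sv n \<Longrightarrow> ?h' x \<in> Sv n" using bij_betwE[OF bij_betw_the_inv_into[OF b]] by simp
  define U where "U = matT n h"
  define V where "V = matT n ?h'"
  have UR: "U \<in> matR K n" unfolding U_def using matT_R linS_addS[OF l1] by blast
  have VR: "V \<in> matR K n" unfolding V_def using matT_R linS_addS[OF l2] by blast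
  have Uc: "U \<in> carrier_mat n n" and Vc: "V \<in> carrier_mat n n" unfolding U_def V_def by (simp_all add: matT_carrier)
  have Ua: "\<And>x. x \<in> Sv n \<Longrightarrow> U *\<^sub>v x = h x" unfolding U_def using matT_apply[OF l1] by blast
  have Va: "\<And>x. x \<in> Sv n \<Longrightarrow> V *\<^sub>v x = ?h' x" unfolding V_def using matT_apply[OF l2] by blast
  have UV: "U * V = 1\<^sub>m n"
  proof (rule mat_eq_units[OF mult_carrier_mat[OF Uc Vc] one_carrier_mat])
    fix j assume j: "j < n"
    have e: "unit_vec n j \<in> Sv n" using Sv_unit[OF j] .
    have "(U * V) *\<^sub>v unit_vec n j = U *\<^sub>v (V *\<^sub>v unit_vec n j)" using Uc Vc by simp
    also have "\<dots> = unit_vec n j" using Va[OF e] Ua[OF h'S[OF e]] hh'[OF e] by simp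
    finally show "(U * V) *\<^sub>v unit_vec n j = 1\<^sub>m n *\<^sub>v unit_vec n j" by simp
  qed
  have VU: "V * U = 1\<^sub>m n"
  proof (rule mat_eq_units[OF mult_carrier_mat[OF Vc Uc] one_carrier_mat])
    fix j assume j: "j < n"
    have e: "unit_vec n j \<in> Sv n" using Sv_unit[OF j] .
    have "(V * U) *\<^sub>v unit_vec n j = V *\<^sub>v (U *\<^sub>v unit_vec n j)" using Uc Vc by simp
    also have "\<dots> = unit_vec n j" using Ua[OF e] Va[OF hS[OF e]] h'h[OF e] by simp
    finally show "(V * U) *\<^sub>v unit_vec n j = 1\<^sub>m n *\<^sub>v unit_vec n j" by simp
  qed
  have rh1: "ring_hom_GR G K n \<rho>" and rh2: "ring_hom_GR G K n \<sigma>" using Hom_rh H1 H2 by auto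
  have sx: "\<sigma> x = U * \<rho> x * V" if x: "x \<in> G" for x
  proof -
    have rc: "\<rho> x \<in> carrier_mat n n" and sc: "\<sigma> x \<in> carrier_mat n n"
      using rho_carrier[OF rh1 x] rho_carrier[OF rh2 x] .
    have "\<sigma> x * U = U * \<rho> x"
    proof (rule mat_eq_units[OF mult_carrier_mat[OF sc Uc] mult_carrier_mat[OF Uc rc]])
      fix j assume j: "j < n"
      have e: "unit_vec n j \<in> Sv n" using Sv_unit[OF j] .
      have re: "\<rho> x *\<^sub>v unit_vec n j \<in> Sv n" using Sv_matR[OF rho_matR[OF rh1 x] e] .
      have "(\<sigma> x * U) *\<^sub>v unit_vec n j = \<sigma> x *\<^sub>v (U *\<^sub>v unit_vec n j)" using sc Uc by simp
      also have "\<dots> = h (\<rho> x *\<^sub>v unit_vec n j)" using Ua[OF e] sm[OF x e] by simp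
      also have "\<dots> = U *\<^sub>v (\<rho> x *\<^sub>v unit_vec n j)" using Ua[OF re] by simp
      also have "\<dots> = (U * \<rho> x) *\<^sub>v unit_vec n j" using Uc rc by simp
      finally show "(\<sigma> x * U) *\<^sub>v unit_vec n j = (U * \<rho> x) *\<^sub>v unit_vec n j" .
    qed
    then have "U * \<rho> x * V = \<sigma> x * U * V" by simp
    also have "\<dots> = \<sigma> x * (U * V)" using sc Uc Vc by simp
    also have "\<dots> = \<sigma> x" using UV sc by simp
    finally show ?thesis by simp
  qed
  have ext: "\<sigma> \<in> extensional G" using rh2 unfolding ring_hom_GR_def by simp
  have "\<sigma> = (\<lambda>x\<in>G. U * \<rho> x * V)"
  proof
    fix x show "\<sigma> x = (\<lambda>x\<in>G. U * \<rho> x * V) x"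
      using sx ext by (cases "x \<in> G") (auto simp: extensional_def)
  qed
  moreover have "U \<in> unitsR K n" unfolding unitsR_def using UR VR UV VU by blast
  ultimately show ?thesis unfolding conj_rel_def using H1 H2 VR UV VU by blast
qed

end

context NF begin

lemma J_to_Hom:
  assumes X: "X \<in> J_mods G K n \<phi> z"
  shows "\<exists>\<rho>\<in>Hom_phi G K n \<phi>. \<exists>f. module_iso G (Vmod n \<rho>) X f"
proof -
  have M: "module (subring_ring G) X" using X unfolding J_mods_def by simp
  obtain f where fiso: "module_iso Op (restrict_scalars \<phi> X) (OKn_module K n) f"
    using X unfolding J_mods_def by blast
  interpret Xm: module "subring_ring G" X by (rule M)
  let ?C = "carrier X"
  have fb: "bij_betw f ?C (Sv n)" using fiso Sv_OKn unfolding module_iso_def restrict_scalars_def by simp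
  have fa: "\<And>x y. x \<in> ?C \<Longrightarrow> y \<in> ?C \<Longrightarrow> f (x \<oplus>\<^bsub>X\<^esub> y) = f x + f y"
    using fiso unfolding module_iso_def restrict_scalars_def by (simp add: OKn_module_def)
  have fs: "\<And>a x. a \<in> Op \<Longrightarrow> x \<in> ?C \<Longrightarrow> f (\<phi> a \<odot>\<^bsub>X\<^esub> x) = a \<cdot>\<^sub>v f x"
    using fiso unfolding module_iso_def restrict_scalars_def by (simp add: OKn_module_def)
  have sc: "\<And>g x. g \<in> G \<Longrightarrow> x \<in> ?C \<Longrightarrow> g \<odot>\<^bsub>X\<^esub> x \<in> ?C"
    using Xm.smult_closed unfolding G_simps by blast
  have ac: "\<And>x y. x \<in> ?C \<Longrightarrow> y \<in> ?C \<Longrightarrow> x \<oplus>\<^bsub>X\<^esub> y \<in> ?C" by (rule Xm.a_closed)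
  have inj: "inj_on f ?C" using fb by (simp add: bij_betw_def)
  define fi where "fi = the_inv_into ?C f"
  have fS: "\<And>x. x \<in> ?C \<Longrightarrow> f x \<in> Sv n" using bij_betwE[OF fb] by simp
  have fiC: "\<And>w. w \<in> Sv n \<Longrightarrow> fi w \<in> ?C" unfolding fi_def using bij_betwE[OF bij_betw_the_inv_into[OF fb]] by simp
  have ffi: "\<And>w. w \<in> Sv n \<Longrightarrow> f (fi w) = w" unfolding fi_def using f_the_inv_into_f_bij_betw[OF fb] by simp
  have fif: "\<And>x. x \<in> ?C \<Longrightarrow> fi (f x) = x" unfolding fi_def by (rule the_inv_into_f_f[OF inj])
  have fi_add: "fi (v + w) = fi v \<oplus>\<^bsub>X\<^esub> fi w" if "v \<in> Sv n" "w \<in> Sv n" for v w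
  proof -
    have "f (fi v \<oplus>\<^bsub>X\<^esub> fi w) = v + w" using fa[OF fiC fiC] ffi that by simp
    then have "fi (v + w) = fi (f (fi v \<oplus>\<^bsub>X\<^esub> fi w))" by simp
    also have "\<dots> = fi v \<oplus>\<^bsub>X\<^esub> fi w" using fif ac fiC that by simp
    finally show ?thesis .
  qed
  define T where "T g w = f (g \<odot>\<^bsub>X\<^esub> fi w)" for g w
  have TS: "\<And>g w. g \<in> G \<Longrightarrow> w \<in> Sv n \<Longrightarrow> T g w \<in> Sv n" unfolding T_def using fS sc fiC by simp
  have linT: "linS n (T g)" if g: "g \<in> G" for g
  proof (rule addS_lin)
    show "addS n (T g)" unfolding addS_def
    proof (intro conjI ballI)
      fix v w assume v: "v \<in> Sv n" and w: "w \<in> Sv n"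
      have "T g (v + w) = f (g \<odot>\<^bsub>X\<^esub> fi v \<oplus>\<^bsub>X\<^esub> g \<odot>\<^bsub>X\<^esub> fi w)"
        unfolding T_def fi_add[OF v w] using Xm.smult_r_distr[of g "fi v" "fi w"] g fiC[OF v] fiC[OF w]
        unfolding G_simps by simp
      also have "\<dots> = T g v + T g w" unfolding T_def using fa sc g fiC v w by simp
      finally show "T g (v + w) = T g v + T g w" .
    qed (use TS g in simp)
  next
    fix c w assume c: "c \<in> OK" and w: "w \<in> Sv n"
    define a where "a = of_int z * c"
    have a: "a \<in> Op" unfolding a_def using Op_zOK[OF c] .
    have pa: "\<phi> a \<in> G" using phi_Op[OF a] .
    have "fi (a \<cdot>\<^sub>v w) = \<phi> a \<odot>\<^bsub>X\<^esub> fi w"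
    proof -
      have "f (\<phi> a \<odot>\<^bsub>X\<^esub> fi w) = a \<cdot>\<^sub>v w" using fs[OF a fiC[OF w]] ffi[OF w] by simp
      then show ?thesis using fif[OF sc[OF pa fiC[OF w]]] by metis
    qed
    then have "T g (a \<cdot>\<^sub>v w) = f (g \<odot>\<^bsub>X\<^esub> (\<phi> a \<odot>\<^bsub>X\<^esub> fi w))" unfolding T_def by simp
    also have "\<dots> = f ((g * \<phi> a) \<odot>\<^bsub>X\<^esub> fi w)"
      using Xm.smult_assoc1[of g "\<phi> a" "fi w"] g pa fiC[OF w] unfolding G_simps by simp
    also have "\<dots> = f (\<phi> a \<odot>\<^bsub>X\<^esub> (g \<odot>\<^bsub>X\<^esub> fi w))"
      using Xm.smult_assoc1[of "\<phi> a" g "fi w"] g pa fiC[OF w] unfolding G_simps by (simp add: mult.commute)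
    also have "\<dots> = a \<cdot>\<^sub>v T g w" unfolding T_def using fs[OF a sc[OF g fiC[OF w]]] .
    finally show "T g ((of_int z * c) \<cdot>\<^sub>v w) = (of_int z * c) \<cdot>\<^sub>v T g w" unfolding a_def .
  qed
  define \<rho> where "\<rho> = (\<lambda>g\<in>G. matT n (T g))"
  have ra: "\<And>g w. g \<in> G \<Longrightarrow> w \<in> Sv n \<Longrightarrow> \<rho> g *\<^sub>v w = T g w"
    unfolding \<rho>_def using matT_apply linT by simp
  have rc: "\<And>g. g \<in> G \<Longrightarrow> \<rho> g \<in> carrier_mat n n" unfolding \<rho>_def by (simp add: matT_carrier)
  have rh: "ring_hom_GR G K n \<rho>" unfolding ring_hom_GR_def
  proof (intro conjI ballI)
    show "\<rho> \<in> extensional G" unfolding \<rho>_def by simp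
    fix x assume x: "x \<in> G"
    show "\<rho> x \<in> matR K n" unfolding \<rho>_def using x matT_R linS_addS[OF linT[OF x]] by simp
  next
    show "\<rho> 1 = 1\<^sub>m n"
    proof (rule mat_eq_units[OF rc[OF G_1] one_carrier_mat])
      fix j assume j: "j < n"
      have e: "unit_vec n j \<in> Sv n" using Sv_unit[OF j] .
      have "\<rho> 1 *\<^sub>v unit_vec n j = f (1 \<odot>\<^bsub>X\<^esub> fi (unit_vec n j))" using ra[OF G_1 e] unfolding T_def .
      also have "\<dots> = unit_vec n j" using Xm.smult_one[OF fiC[OF e]] ffi[OF e] unfolding G_simps by simp
      finally show "\<rho> 1 *\<^sub>v unit_vec n j = 1\<^sub>m n *\<^sub>v unit_vec n j" by simp
    qed
  next
    fix x y assume x: "x \<in> G" and y: "y \<in> G"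
    show "\<rho> (x + y) = \<rho> x + \<rho> y"
    proof (rule mat_eq_units[OF rc[OF G_add[OF x y]] add_carrier_mat[OF rc[OF y]]])
      fix j assume j: "j < n"
      have e: "unit_vec n j \<in> Sv n" using Sv_unit[OF j] .
      let ?u = "fi (unit_vec n j)"
      have u: "?u \<in> ?C" using fiC[OF e] .
      have "(\<rho> x + \<rho> y) *\<^sub>v unit_vec n j = \<rho> x *\<^sub>v unit_vec n j + \<rho> y *\<^sub>v unit_vec n j"
        using add_mult_distrib_mat_vec[OF rc[OF x] rc[OF y]] by simp
      also have "\<dots> = f (x \<odot>\<^bsub>X\<^esub> ?u) + f (y \<odot>\<^bsub>X\<^esub> ?u)" using ra[OF x e] ra[OF y e] unfolding T_def by simp
      also have "\<dots> = f (x \<odot>\<^bsub>X\<^esub> ?u \<oplus>\<^bsub>X\<^esub> y \<odot>\<^bsub>X\<^esub> ?u)" using fa sc x y u by simp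
      also have "\<dots> = f ((x + y) \<odot>\<^bsub>X\<^esub> ?u)"
        using Xm.smult_l_distr[of x y ?u] x y u unfolding G_simps by simp
      also have "\<dots> = \<rho> (x + y) *\<^sub>v unit_vec n j" using ra[OF G_add[OF x y] e] unfolding T_def by simp
      finally show "\<rho> (x + y) *\<^sub>v unit_vec n j = (\<rho> x + \<rho> y) *\<^sub>v unit_vec n j" by simp
    qed
    show "\<rho> (x * y) = \<rho> x * \<rho> y"
    proof (rule mat_eq_units[OF rc[OF G_mult[OF x y]] mult_carrier_mat[OF rc[OF x] rc[OF y]]])
      fix j assume j: "j < n"
      have e: "unit_vec n j \<in> Sv n" using Sv_unit[OF j] .
      let ?u = "fi (unit_vec n j)"
      have u: "?u \<in> ?C" using fiC[OF e] .
      have "(\<rho> x * \<rho> y) *\<^sub>v unit_vec n j = \<rho> x *\<^sub>v (\<rho> y *\<^sub>v unit_vec n j)"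
        using rc[OF x] rc[OF y] by simp
      also have "\<dots> = T x (T y (unit_vec n j))" using ra[OF y e] ra[OF x TS[OF y e]] by simp
      also have "\<dots> = f (x \<odot>\<^bsub>X\<^esub> (y \<odot>\<^bsub>X\<^esub> ?u))" unfolding T_def using fif[OF sc[OF y u]] by simp
      also have "\<dots> = f ((x * y) \<odot>\<^bsub>X\<^esub> ?u)"
        using Xm.smult_assoc1[of x y ?u] x y u unfolding G_simps by simp
      also have "\<dots> = \<rho> (x * y) *\<^sub>v unit_vec n j" using ra[OF G_mult[OF x y] e] unfolding T_def by simp
      finally show "\<rho> (x * y) *\<^sub>v unit_vec n j = (\<rho> x * \<rho> y) *\<^sub>v unit_vec n j" by simp
    qed
  qed
  have scal: "\<rho> (\<phi> a) = a \<cdot>\<^sub>m 1\<^sub>m n" if a: "a \<in> Op" for a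
  proof (rule mat_eq_units[OF rc[OF phi_Op[OF a]] smult_carrier_mat[OF one_carrier_mat]])
    fix j assume j: "j < n"
    have e: "unit_vec n j \<in> Sv n" using Sv_unit[OF j] .
    have "\<rho> (\<phi> a) *\<^sub>v unit_vec n j = f (\<phi> a \<odot>\<^bsub>X\<^esub> fi (unit_vec n j))" using ra[OF phi_Op[OF a] e] unfolding T_def .
    also have "\<dots> = a \<cdot>\<^sub>v unit_vec n j" using fs[OF a fiC[OF e]] ffi[OF e] by simp
    also have "\<dots> = (a \<cdot>\<^sub>m 1\<^sub>m n) *\<^sub>v unit_vec n j"
      using smult_mat_vec[OF one_carrier_mat unit_vec_carrier, of a n j] by simp
    finally show "\<rho> (\<phi> a) *\<^sub>v unit_vec n j = (a \<cdot>\<^sub>m 1\<^sub>m n) *\<^sub>v unit_vec n j" .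
  qed
  have H: "\<rho> \<in> Hom_phi G K n \<phi>" unfolding Hom_phi_def using rh phi_compat_from[OF rh scal] by simp
  have "module_iso G (Vmod n \<rho>) X fi" unfolding module_iso_def Vmod_simps
  proof (intro conjI ballI)
    show "bij_betw fi (Sv n) ?C" unfolding fi_def by (rule bij_betw_the_inv_into[OF fb])
    fix v w assume "v \<in> Sv n" "w \<in> Sv n"
    then show "fi (v + w) = fi v \<oplus>\<^bsub>X\<^esub> fi w" by (rule fi_add)
  next
    fix g w assume g: "g \<in> G" and w: "w \<in> Sv n"
    show "fi (\<rho> g *\<^sub>v w) = g \<odot>\<^bsub>X\<^esub> fi w" using ra[OF g w] fif[OF sc[OF g fiC[OF w]]] unfolding T_def by simp
  qed
  then show ?thesis using H by blast
qed

end

context NF begin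

lemma X_closed_add:
  assumes "module (subring_ring G) X" "x \<in> carrier X" "y \<in> carrier X"
  shows "x \<oplus>\<^bsub>X\<^esub> y \<in> carrier X"
proof -
  interpret M: module "subring_ring G" X by (rule assms(1))
  show ?thesis using M.a_closed assms(2,3) by blast
qed

lemma X_closed_smult:
  assumes "module (subring_ring G) X" "a \<in> G" "x \<in> carrier X"
  shows "a \<odot>\<^bsub>X\<^esub> x \<in> carrier X"
proof -
  interpret M: module "subring_ring G" X by (rule assms(1))
  show ?thesis using M.smult_closed assms(2,3) unfolding G_simps by blast
qed

lemma main:
  fixes enc :: "'a vec \<Rightarrow> nat"
  assumes inj: "inj enc"
  shows "\<exists>f. bij_betw f (Hom_phi G K n \<phi> // conj_rel G K n \<phi>)
                (J_mods G K n \<phi> z // Gamma_iso_rel G (J_mods G K n \<phi> z))"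
proof -
  let ?J = "J_mods G K n \<phi> z" and ?H = "Hom_phi G K n \<phi>"
  define F where "F \<rho> = tmod (Vmod n \<rho>) enc" for \<rho>
  define d where "d \<rho> = the_inv_into (carrier (Vmod n \<rho>)) enc" for \<rho>
  have injV: "inj_on enc (carrier (Vmod n \<rho>))" for \<rho> using inj by (simp add: inj_on_def inj_def)
  have encI: "module_iso G (Vmod n \<rho>) (F \<rho>) enc" for \<rho>
    unfolding F_def using iso_mono[OF tmod_iso[OF injV]] by simp
  have dI: "module_iso G (F \<rho>) (Vmod n \<rho>) (d \<rho>)" if H: "\<rho> \<in> ?H" for \<rho>
    unfolding d_def using iso_inv[OF encI V_closed_add V_closed_smult[OF Hom_rh[OF H]]] .
  have FJ: "F \<rho> \<in> ?J" if H: "\<rho> \<in> ?H" for \<rho>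
  proof -
    have "module (subring_ring G) (F \<rho>)" unfolding F_def
      using tmod_module[OF V_module[OF Hom_rh[OF H]] injV] .
    moreover have "module_iso Op (restrict_scalars \<phi> (F \<rho>)) (restrict_scalars \<phi> (Vmod n \<rho>)) (d \<rho>)"
      using iso_restrict[OF dI[OF H]] phi_Op by blast
    then have "module_iso Op (restrict_scalars \<phi> (F \<rho>)) (OKn_module K n) (id \<circ> d \<rho>)"
      using iso_comp V_iso_OKn[OF H] by blast
    ultimately show ?thesis unfolding J_mods_def by blast
  qed
  have eqJ: "equiv ?J (Gamma_iso_rel G ?J)"
  proof (rule equivI)
    show "Gamma_iso_rel G ?J \<subseteq> ?J \<times> ?J" unfolding Gamma_iso_rel_def by auto
    show "refl_on ?J (Gamma_iso_rel G ?J)" unfolding refl_on_def Gamma_iso_rel_def using iso_id by blast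
    show "sym (Gamma_iso_rel G ?J)" unfolding sym_def
    proof (intro allI impI)
      fix X Y assume "(X, Y) \<in> Gamma_iso_rel G ?J"
      then obtain f where XY: "X \<in> ?J" "Y \<in> ?J" "module_iso G X Y f" unfolding Gamma_iso_rel_def by blast
      have M: "module (subring_ring G) X" using XY(1) unfolding J_mods_def by simp
      have "module_iso G Y X (the_inv_into (carrier X) f)"
        using iso_inv[OF XY(3) X_closed_add[OF M] X_closed_smult[OF M]] .
      then show "(Y, X) \<in> Gamma_iso_rel G ?J" unfolding Gamma_iso_rel_def using XY by blast
    qed
    show "trans (Gamma_iso_rel G ?J)" unfolding trans_def
    proof (intro allI impI)
      fix X Y W assume "(X, Y) \<in> Gamma_iso_rel G ?J" "(Y, W) \<in> Gamma_iso_rel G ?J"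
      then obtain f g where "X \<in> ?J" "W \<in> ?J" "module_iso G X Y f" "module_iso G Y W g"
        unfolding Gamma_iso_rel_def by blast
      then show "(X, W) \<in> Gamma_iso_rel G ?J" unfolding Gamma_iso_rel_def using iso_comp by blast
    qed
  qed
  show ?thesis
  proof (rule quot_bij[OF _ eqJ])
    show "conj_rel G K n \<phi> \<subseteq> ?H \<times> ?H" unfolding conj_rel_def by auto
    show "\<And>\<rho>. \<rho> \<in> ?H \<Longrightarrow> F \<rho> \<in> ?J" by (rule FJ)
  next
    fix \<rho> \<sigma> assume H1: "\<rho> \<in> ?H" and H2: "\<sigma> \<in> ?H"
    show "(\<rho>, \<sigma>) \<in> conj_rel G K n \<phi> \<longleftrightarrow> (F \<rho>, F \<sigma>) \<in> Gamma_iso_rel G ?J"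
    proof
      assume "(\<rho>, \<sigma>) \<in> conj_rel G K n \<phi>"
      then obtain h where "module_iso G (Vmod n \<rho>) (Vmod n \<sigma>) h" using conj_iso by blast
      then have "module_iso G (F \<rho>) (F \<sigma>) (enc \<circ> (h \<circ> d \<rho>))"
        using iso_comp[OF dI[OF H1]] iso_comp encI by blast
      then show "(F \<rho>, F \<sigma>) \<in> Gamma_iso_rel G ?J" unfolding Gamma_iso_rel_def using FJ H1 H2 by blast
    next
      assume "(F \<rho>, F \<sigma>) \<in> Gamma_iso_rel G ?J"
      then obtain k where "module_iso G (F \<rho>) (F \<sigma>) k" unfolding Gamma_iso_rel_def by blast
      then have "module_iso G (Vmod n \<rho>) (Vmod n \<sigma>) (d \<sigma> \<circ> (k \<circ> enc))"
        using iso_comp[OF encI] iso_comp dI[OF H2] by blast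
      then show "(\<rho>, \<sigma>) \<in> conj_rel G K n \<phi>" using iso_conj[OF H1 H2] by blast
    qed
  next
    fix X assume X: "X \<in> ?J"
    then obtain \<rho> f where H: "\<rho> \<in> ?H" and f: "module_iso G (Vmod n \<rho>) X f" using J_to_Hom by blast
    then have "module_iso G (F \<rho>) X (f \<circ> d \<rho>)" using iso_comp[OF dI[OF H]] by blast
    then show "\<exists>\<rho>\<in>?H. (F \<rho>, X) \<in> Gamma_iso_rel G ?J" unfolding Gamma_iso_rel_def using FJ[OF H] X H by blast
  qed
qed

end

theorem proposition10p5:
  fixes G K :: "'a::field_char_0 set" and \<phi> :: "'a \<Rightarrow> 'a" and n :: nat and z :: int
  assumes "number_field_type TYPE('a)"
    and "is_order G"
    and "is_subfield K"
    and "n = field_degree K"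
    and "ring_morphism_on K \<phi>"
    and "z > 0" and "(\<lambda>a. \<phi> (of_int z * a)) ` ring_of_integers K \<subseteq> G"
  shows "\<exists>f. bij_betw f (Hom_phi G K n \<phi> // conj_rel G K n \<phi>)
                (J_mods G K n \<phi> z // Gamma_iso_rel G (J_mods G K n \<phi> z))"
proof -
  interpret NF G K \<phi> z using assms by unfold_locales auto
  obtain enc :: "'a vec \<Rightarrow> nat" where "inj enc" using countable_vec[OF assms(1)] by blast
  then show ?thesis by (rule main)
qed

end
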